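(* Let $m,n,p,r$ be positive integers, let $\mathcal{A}:\mathbb{C}^{m\times n}\to\mathbb{C}^p$ be a linear operator with $\delta_{4r}(\mathcal{A})\le 0.04$, let $X_0\in\mathbb{C}^{m\times n}$ and $\nu\in\mathbb{C}^p$ be arbitrary, and let $b=\mathcal{A}X_0+\nu$. Let $(\widehat{X}_k)_{k\ge 0}$ be any sequence of estimates produced by ADMiRA with input $(\mathcal{A},b,r)$. Then for every $k\ge 0$, $$\|X_0-\widehat{X}_{k+1}\|_F\le 0.5\,\|X_0-\widehat{X}_k\|_F+8\epsilon,$$ and consequently $$\|X_0-\widehat{X}_k\|_F\le 2^{-k}\|X_0\|_F+16\epsilon\quad\text{for all }k\ge 0,$$ where $\epsilon=\|X_0-X_{0,r}\|_F+\frac{1}{\sqrt r}\|X_0-X_{0,r}\|_*+\|\nu\|_2$ and $X_{0,r}$ is a best rank-$r$ approximation of $X_0$ in Frobenius norm.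
   Context: $\mathbb{C}^p$ has inner product $\langle x,y\rangle=y^Hx$ and norm $\|\cdot\|_2$; $\mathbb{C}^{m\times n}$ has inner product $\langle X,Y\rangle=\mathrm{tr}(Y^HX)$ and Frobenius norm $\|\cdot\|_F$; $\|\cdot\|_*$ is the nuclear norm (sum of singular values); $\mathcal{A}^*$ is the adjoint of $\mathcal{A}$ with respect to these inner products. For $s\ge1$, the rank-restricted isometry constant $\delta_s(\mathcal{A})$ is the smallest $\delta\ge0$ such that $(1-\delta)\|X\|_F^2\le\|\mathcal{A}X\|_2^2\le(1+\delta)\|X\|_F^2$ for all $X$ with $\mathrm{rank}(X)\le s$. The set of atoms $\mathbb{O}$ is a set of rank-one matrices in $\mathbb{C}^{m\times n}$ of unit Frobenius norm such that every nonzero rank-one matrix is a scalar multiple of exactly one element of $\mathbb{O}$. For $\Psi\subset\mathbb{O}$, $\mathcal{P}_\Psi$ denotes the orthogonal projection of $\mathbb{C}^{m\times n}$ onto $\mathrm{span}(\Psi)$. ADMiRA with input $(\mathcal{A},b,r)$: set $\widehat{X}_0=0$, $\widehat{\Psi}_0=\emptyset$; for $k=0,1,2,\dots$: (1) choose $\Psi'_{k+1}$ maximizing $\|\mathcal{P}_\Psi\mathcal{A}^*(b-\mathcal{A}\widehat{X}_k)\|_F$ over $\Psi\subset\mathbb{O}$ with $|\Psi|\le 2r$; (2) $\widetilde{\Psi}_{k+1}=\Psi'_{k+1}\cup\widehat{\Psi}_k$; (3) $\widetilde{X}_{k+1}$ minimizes $\|b-\mathcal{A}X\|_2$ over $X\in\mathrm{span}(\widetilde{\Psi}_{k+1})$;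 (4) choose $\widehat{\Psi}_{k+1}$ maximizing $\|\mathcal{P}_\Psi\widetilde{X}_{k+1}\|_F$ over $\Psi\subset\mathbb{O}$ with $|\Psi|\le r$; (5) $\widehat{X}_{k+1}=\mathcal{P}_{\widehat{\Psi}_{k+1}}\widetilde{X}_{k+1}$. $\widehat{X}_k$ is called the estimate in the $k$-th iteration. *)

theory Defs
  imports "HOL-Analysis.Analysis"
begin

text \<open>Matrices in C^(m x n) are modelled as complex^'n^'m (index types 'm, 'n finite),
vectors in C^p as complex^'p. The library norm on these types is the Frobenius norm
resp. the Euclidean 2-norm.\<close>

type_synonym ('m, 'n) cmat = "complex^'n^'m"

definition cinner_vec :: "complex^'p::finite \<Rightarrow> complex^'p \<Rightarrow> complex" where
  "cinner_vec x y = (\<Sum>i\<in>UNIV. x$i * cnj (y$i))"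

definition cinner_mat :: "('m::finite,'n::finite) cmat \<Rightarrow> ('m,'n) cmat \<Rightarrow> complex" where
  "cinner_mat X Y = (\<Sum>i\<in>UNIV. \<Sum>j\<in>UNIV. X$i$j * cnj (Y$i$j))"

definition smat :: "complex \<Rightarrow> ('m::finite,'n::finite) cmat \<Rightarrow> ('m,'n) cmat" where
  "smat c X = (\<chi> i j. c * X$i$j)"

definition svec :: "complex \<Rightarrow> complex^'p::finite \<Rightarrow> complex^'p" where
  "svec c x = (\<chi> i. c * x$i)"

definition clinear_op :: "(('m::finite,'n::finite) cmat \<Rightarrow> complex^'p::finite) \<Rightarrow> bool" where
  "clinear_op A \<longleftrightarrow> (\<forall>X Y. A (X + Y) = A X + A Y) \<and> (\<forall>c X. A (smat c X) = svec c (A X))"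

definition adjoint_op :: "(('m::finite,'n::finite) cmat \<Rightarrow> complex^'p::finite) \<Rightarrow> complex^'p \<Rightarrow> ('m,'n) cmat" where
  "adjoint_op A y = (THE Z. \<forall>X. cinner_vec (A X) y = cinner_mat X Z)"

definition rip_const :: "(('m::finite,'n::finite) cmat \<Rightarrow> complex^'p::finite) \<Rightarrow> nat \<Rightarrow> real" where
  "rip_const A s = Inf {\<delta>. \<delta> \<ge> 0 \<and> (\<forall>X. rank X \<le> s \<longrightarrow>
      (1 - \<delta>) * (norm X)^2 \<le> (norm (A X))^2 \<and> (norm (A X))^2 \<le> (1 + \<delta>) * (norm X)^2)}"

definition outer :: "complex^'m::finite \<Rightarrow> complex^'n::finite \<Rightarrow> ('m,'n) cmat" where
  "outer u v = (\<chi> i j. u$i * cnj (v$j))"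

definition svd_decomp :: "('m::finite,'n::finite) cmat \<Rightarrow> nat \<Rightarrow> (nat \<Rightarrow> real)
    \<Rightarrow> (nat \<Rightarrow> complex^'m) \<Rightarrow> (nat \<Rightarrow> complex^'n) \<Rightarrow> bool" where
  "svd_decomp X K \<sigma> u v \<longleftrightarrow>
     (\<forall>k<K. \<sigma> k > 0) \<and>
     (\<forall>i<K. \<forall>j<K. cinner_vec (u i) (u j) = (if i = j then 1 else 0)) \<and>
     (\<forall>i<K. \<forall>j<K. cinner_vec (v i) (v j) = (if i = j then 1 else 0)) \<and>
     X = (\<Sum>k<K. smat (complex_of_real (\<sigma> k)) (outer (u k) (v k)))"

definition nuclear_norm :: "('m::finite,'n::finite) cmat \<Rightarrow> real" where
  "nuclear_norm X = (THE s. \<exists>K \<sigma> u v. svd_decomp X K \<sigma> u v \<and> s = (\<Sum>k<K. \<sigma> k))"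

definition atom_set :: "('m::finite,'n::finite) cmat set \<Rightarrow> bool" where
  "atom_set Ats \<longleftrightarrow> (\<forall>\<psi>\<in>Ats. rank \<psi> = 1 \<and> norm \<psi> = 1) \<and>
     (\<forall>X. rank X = 1 \<longrightarrow> (\<exists>!\<psi>. \<psi> \<in> Ats \<and> (\<exists>c. X = smat c \<psi>)))"

definition mspan :: "('m::finite,'n::finite) cmat set \<Rightarrow> ('m,'n) cmat set" where
  "mspan S = {X. \<exists>F c. finite F \<and> F \<subseteq> S \<and> X = (\<Sum>\<psi>\<in>F. smat (c \<psi>) \<psi>)}"

definition proj :: "('m::finite,'n::finite) cmat set \<Rightarrow> ('m,'n) cmat \<Rightarrow> ('m,'n) cmat" where
  "proj \<Psi> X = (THE Y. Y \<in> mspan \<Psi> \<and> (\<forall>Z\<in>mspan \<Psi>. cinner_mat (X - Y) Z = 0))"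

definition best_atoms :: "('m::finite,'n::finite) cmat set \<Rightarrow> nat \<Rightarrow> ('m,'n) cmat \<Rightarrow> ('m,'n) cmat set \<Rightarrow> bool" where
  "best_atoms Ats s R \<Psi> \<longleftrightarrow> \<Psi> \<subseteq> Ats \<and> finite \<Psi> \<and> card \<Psi> \<le> s \<and>
     (\<forall>\<Phi>. \<Phi> \<subseteq> Ats \<and> finite \<Phi> \<and> card \<Phi> \<le> s \<longrightarrow> norm (proj \<Phi> R) \<le> norm (proj \<Psi> R))"

definition admira_run :: "('m::finite,'n::finite) cmat set \<Rightarrow> (('m,'n) cmat \<Rightarrow> complex^'p::finite)
    \<Rightarrow> complex^'p \<Rightarrow> nat \<Rightarrow> (nat \<Rightarrow> ('m,'n) cmat) \<Rightarrow> bool" where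
  "admira_run Ats A b r Xh \<longleftrightarrow>
    (\<exists>\<Psi>h \<Psi>' \<Psi>t Xt.
       Xh 0 = 0 \<and> \<Psi>h 0 = {} \<and>
       (\<forall>k.
          best_atoms Ats (2 * r) (adjoint_op A (b - A (Xh k))) (\<Psi>' (Suc k)) \<and>
          \<Psi>t (Suc k) = \<Psi>' (Suc k) \<union> \<Psi>h k \<and>
          Xt (Suc k) \<in> mspan (\<Psi>t (Suc k)) \<and>
          (\<forall>X\<in>mspan (\<Psi>t (Suc k)). norm (b - A (Xt (Suc k))) \<le> norm (b - A X)) \<and>
          best_atoms Ats r (Xt (Suc k)) (\<Psi>h (Suc k)) \<and>
          Xh (Suc k) = proj (\<Psi>h (Suc k)) (Xt (Suc k))))"

end

theory Submission
  imports Defs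
begin

lemma inner_mat_Re: "inner (X::('m::finite,'n::finite) cmat) Y = Re (cinner_mat X Y)"
  by (simp add: cinner_mat_def inner_vec_def inner_complex_def Re_sum)

lemma inner_vec_Re: "inner (x::complex^'p::finite) y = Re (cinner_vec x y)"
  by (simp add: cinner_vec_def inner_vec_def inner_complex_def Re_sum)

lemma smat_real: "smat (complex_of_real c) X = c *\<^sub>R X"
  by (simp add: smat_def vec_eq_iff scaleR_conv_of_real[symmetric])

lemma svec_real: "svec (complex_of_real c) X = c *\<^sub>R X"
  by (simp add: svec_def vec_eq_iff scaleR_conv_of_real[symmetric])

lemma smat_add_left: "smat (a + b) X = smat a X + smat b X"
  by (simp add: smat_def vec_eq_iff algebra_simps)
lemma smat_add_right: "smat a (X + Y) = smat a X + smat a Y"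
  by (simp add: smat_def vec_eq_iff algebra_simps)
lemma smat_zero_left[simp]: "smat 0 X = 0"
  by (simp add: smat_def vec_eq_iff)
lemma smat_zero_right[simp]: "smat a 0 = 0"
  by (simp add: smat_def vec_eq_iff)
lemma smat_smat: "smat a (smat b X) = smat (a*b) X"
  by (simp add: smat_def vec_eq_iff)
lemma smat_one[simp]: "smat 1 X = X"
  by (simp add: smat_def vec_eq_iff)
lemma smat_minus: "smat a (X - Y) = smat a X - smat a Y"
  by (simp add: smat_def vec_eq_iff algebra_simps)
lemma smat_sum: "smat a (sum f S) = sum (\<lambda>x. smat a (f x)) S"
  by (induct S rule: infinite_finite_induct) (auto simp: smat_add_right)

lemma cinner_mat_smat_right: "cinner_mat X (smat c Y) = cnj c * cinner_mat X Y"
  by (simp add: cinner_mat_def smat_def sum_distrib_left algebra_simps)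
lemma cinner_mat_smat_left: "cinner_mat (smat c X) Y = c * cinner_mat X Y"
  by (simp add: cinner_mat_def smat_def sum_distrib_left algebra_simps)

lemma cinner_mat_zero_iff:
  "cinner_mat X Y = 0 \<longleftrightarrow> inner X Y = 0 \<and> inner X (smat \<i> Y) = 0"
proof -
  have "inner X (smat \<i> Y) = Im (cinner_mat X Y)"
    by (simp add: inner_mat_Re cinner_mat_smat_right)
  then show ?thesis by (simp add: inner_mat_Re complex_eq_iff)
qed

lemma clinear_linear:
  assumes "clinear_op (A :: ('m::finite,'n::finite) cmat \<Rightarrow> complex^'p::finite)"
  shows "linear A"
proof
  fix X Y show "A (X + Y) = A X + A Y" using assms by (simp add: clinear_op_def)
next
  fix c :: real and X
  have "A (smat (complex_of_real c) X) = svec (complex_of_real c) (A X)"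
    using assms by (simp add: clinear_op_def)
  then show "A (c *\<^sub>R X) = c *\<^sub>R A X" by (simp add: smat_real svec_real)
qed


lemma mspan_finite:
  assumes "finite S"
  shows "mspan S = {X. \<exists>c. X = (\<Sum>\<psi>\<in>S. smat (c \<psi>) \<psi>)}"
proof
  show "mspan S \<subseteq> {X. \<exists>c. X = (\<Sum>\<psi>\<in>S. smat (c \<psi>) \<psi>)}"
  proof
    fix X assume "X \<in> mspan S"
    then obtain F c where F: "finite F" "F \<subseteq> S" "X = (\<Sum>\<psi>\<in>F. smat (c \<psi>) \<psi>)"
      by (auto simp: mspan_def)
    have "X = (\<Sum>\<psi>\<in>S. smat (if \<psi> \<in> F then c \<psi> else 0) \<psi>)"
      unfolding F(3) by (rule sum.mono_neutral_cong_left) (use assms F in auto)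
    then show "X \<in> {X. \<exists>c. X = (\<Sum>\<psi>\<in>S. smat (c \<psi>) \<psi>)}"
      by (intro CollectI exI[of _ "\<lambda>\<psi>. if \<psi> \<in> F then c \<psi> else 0"])
  qed
next
  show "{X. \<exists>c. X = (\<Sum>\<psi>\<in>S. smat (c \<psi>) \<psi>)} \<subseteq> mspan S"
    using assms by (auto simp: mspan_def)
qed

lemma mspan_zero[simp]: "0 \<in> mspan S"
  unfolding mspan_def by (rule CollectI, rule exI[of _ "{}"]) auto

lemma mspan_base: "\<psi> \<in> S \<Longrightarrow> \<psi> \<in> mspan S"
  unfolding mspan_def by (rule CollectI, rule exI[of _ "{\<psi>}"], rule exI[of _ "\<lambda>_. 1"]) auto

lemma mspan_add: assumes "X \<in> mspan S" "Y \<in> mspan S" shows "X + Y \<in> mspan S"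
proof -
  obtain F c where F: "finite F" "F \<subseteq> S" "X = (\<Sum>\<psi>\<in>F. smat (c \<psi>) \<psi>)"
    using assms(1) by (auto simp: mspan_def)
  obtain G d where G: "finite G" "G \<subseteq> S" "Y = (\<Sum>\<psi>\<in>G. smat (d \<psi>) \<psi>)"
    using assms(2) by (auto simp: mspan_def)
  have X: "X = (\<Sum>\<psi>\<in>F \<union> G. smat (if \<psi> \<in> F then c \<psi> else 0) \<psi>)"
    unfolding F(3) by (rule sum.mono_neutral_cong_left) (use F G in auto)
  have Y: "Y = (\<Sum>\<psi>\<in>F \<union> G. smat (if \<psi> \<in> G then d \<psi> else 0) \<psi>)"
    unfolding G(3) by (rule sum.mono_neutral_cong_left) (use F G in auto)
  have "X + Y = (\<Sum>\<psi>\<in>F \<union> G. smat ((if \<psi> \<in> F then c \<psi> else 0) + (if \<psi> \<in> G then d \<psi> else 0)) \<psi>)"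
    unfolding X Y by (simp add: smat_add_left sum.distrib)
  then show ?thesis using F G unfolding mspan_def
    by (intro CollectI exI[of _ "F \<union> G"] exI[of _ "\<lambda>\<psi>. (if \<psi> \<in> F then c \<psi> else 0) + (if \<psi> \<in> G then d \<psi> else 0)"]) auto
qed

lemma mspan_smat: assumes "X \<in> mspan S" shows "smat a X \<in> mspan S"
proof -
  obtain F c where F: "finite F" "F \<subseteq> S" "X = (\<Sum>\<psi>\<in>F. smat (c \<psi>) \<psi>)"
    using assms(1) by (auto simp: mspan_def)
  have "smat a X = (\<Sum>\<psi>\<in>F. smat (a * c \<psi>) \<psi>)"
    unfolding F(3) by (simp add: smat_sum smat_smat)
  then show ?thesis using F unfolding mspan_def
    by (intro CollectI exI[of _ F] exI[of _ "\<lambda>\<psi>. a * c \<psi>"]) auto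
qed

lemma mspan_scaleR: "X \<in> mspan S \<Longrightarrow> c *\<^sub>R X \<in> mspan S"
  using mspan_smat[of X S "complex_of_real c"] by (simp add: smat_real)

lemma mspan_uminus: "X \<in> mspan S \<Longrightarrow> - X \<in> mspan S"
  using mspan_scaleR[of X S "-1"] by simp

lemma mspan_diff: "X \<in> mspan S \<Longrightarrow> Y \<in> mspan S \<Longrightarrow> X - Y \<in> mspan S"
  using mspan_add[of X S "-Y"] mspan_uminus[of Y S] by simp

lemma mspan_sum: "finite I \<Longrightarrow> (\<And>i. i \<in> I \<Longrightarrow> f i \<in> mspan S) \<Longrightarrow> sum f I \<in> mspan S"
  by (induct I rule: finite_induct) (auto intro: mspan_add)

lemma mspan_mono: "S \<subseteq> T \<Longrightarrow> mspan S \<subseteq> mspan T"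
  unfolding mspan_def by blast

lemma subspace_mspan: "subspace (mspan S)"
  unfolding subspace_def by (simp add: mspan_add mspan_scaleR)

lemma span_mspan[simp]: "span (mspan S) = mspan S"
  by (rule span_subspace) (auto simp: subspace_mspan span_base)


lemma smat_i_mspan: "Z \<in> mspan S \<Longrightarrow> smat \<i> Z \<in> mspan S"
  by (rule mspan_smat)

lemma proj_unique_real:
  assumes "Y1 \<in> mspan S" "\<forall>Z\<in>mspan S. inner (X - Y1) Z = 0"
    and "Y2 \<in> mspan S" "\<forall>Z\<in>mspan S. inner (X - Y2) Z = 0"
  shows "Y1 = Y2"
proof -
  have d: "Y1 - Y2 \<in> mspan S" using assms by (simp add: mspan_diff)
  have "inner (Y1 - Y2) (Y1 - Y2) = inner (X - Y2) (Y1 - Y2) - inner (X - Y1) (Y1 - Y2)"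
    by (simp add: inner_diff_left)
  also have "\<dots> = 0" using assms d by simp
  finally show ?thesis by simp
qed

lemma proj_exists_real:
  "\<exists>Y. Y \<in> mspan S \<and> (\<forall>Z\<in>mspan S. inner (X - Y) Z = 0)"
proof -
  obtain y z where "y \<in> span (mspan S)" "\<And>w. w \<in> span (mspan S) \<Longrightarrow> orthogonal z w" "X = y + z"
    using orthogonal_subspace_decomp_exists by blast
  then show ?thesis by (intro exI[of _ y]) (auto simp: orthogonal_def)
qed

lemma proj_cond_iff:
  assumes "Y \<in> mspan S"
  shows "(\<forall>Z\<in>mspan S. cinner_mat (X - Y) Z = 0) \<longleftrightarrow> (\<forall>Z\<in>mspan S. inner (X - Y) Z = 0)"
  using smat_i_mspan by (auto simp: cinner_mat_zero_iff)

lemma proj_char: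
  assumes "Y \<in> mspan S" "\<forall>Z\<in>mspan S. inner (X - Y) Z = 0"
  shows "proj S X = Y"
  unfolding proj_def
proof (rule the_equality)
  show "Y \<in> mspan S \<and> (\<forall>Z\<in>mspan S. cinner_mat (X - Y) Z = 0)"
    using assms proj_cond_iff by blast
next
  fix Y' assume "Y' \<in> mspan S \<and> (\<forall>Z\<in>mspan S. cinner_mat (X - Y') Z = 0)"
  then show "Y' = Y" using proj_cond_iff proj_unique_real assms by blast
qed

lemma proj_in: "proj S X \<in> mspan S"
  using proj_exists_real[of S X] proj_char by metis

lemma proj_orth: "Z \<in> mspan S \<Longrightarrow> inner (X - proj S X) Z = 0"
  using proj_exists_real[of S X] proj_char by metis

lemma inner_proj: "Z \<in> mspan S \<Longrightarrow> inner (proj S X) Z = inner X Z"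
  using proj_orth[of Z S X] by (simp add: inner_diff_left)

lemma proj_pyth: "(norm X)^2 = (norm (proj S X))^2 + (norm (X - proj S X))^2"
proof -
  have "inner (X - proj S X) (proj S X) = 0" by (rule proj_orth[OF proj_in])
  then have "(norm (proj S X + (X - proj S X)))^2 = (norm (proj S X))^2 + (norm (X - proj S X))^2"
    by (intro norm_add_Pythagorean) (simp add: orthogonal_def inner_commute)
  then show ?thesis by simp
qed

lemma proj_best: assumes "Z \<in> mspan S" shows "norm (X - proj S X) \<le> norm (X - Z)"
proof -
  have "proj S X - Z \<in> mspan S" using assms proj_in mspan_diff by blast
  then have o: "inner (X - proj S X) (proj S X - Z) = 0" by (rule proj_orth)
  have "X - Z = (X - proj S X) + (proj S X - Z)" by simp
  then have "(norm (X - Z))^2 = (norm (X - proj S X))^2 + (norm (proj S X - Z))^2"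
    using o norm_add_Pythagorean[of "X - proj S X" "proj S X - Z"] by (simp add: orthogonal_def)
  then have "(norm (X - proj S X))^2 \<le> (norm (X - Z))^2" by simp
  then show ?thesis by (simp add: power2_le_iff_abs_le)
qed

lemma proj_diff: "proj S (X - Y) = proj S X - proj S Y"
proof (rule proj_char)
  show "proj S X - proj S Y \<in> mspan S" by (simp add: mspan_diff proj_in)
  show "\<forall>Z\<in>mspan S. inner (X - Y - (proj S X - proj S Y)) Z = 0"
  proof
    fix Z assume "Z \<in> mspan S"
    then have "inner (X - proj S X) Z = 0" "inner (Y - proj S Y) Z = 0" by (auto intro: proj_orth)
    then show "inner (X - Y - (proj S X - proj S Y)) Z = 0"
      by (simp add: algebra_simps inner_diff_left)
  qed
qed

lemma proj_add: "proj S (X + Y) = proj S X + proj S Y"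
proof (rule proj_char)
  show "proj S X + proj S Y \<in> mspan S" by (simp add: mspan_add proj_in)
  show "\<forall>Z\<in>mspan S. inner (X + Y - (proj S X + proj S Y)) Z = 0"
  proof
    fix Z assume "Z \<in> mspan S"
    then have "inner (X - proj S X) Z = 0" "inner (Y - proj S Y) Z = 0" by (auto intro: proj_orth)
    then show "inner (X + Y - (proj S X + proj S Y)) Z = 0"
      by (simp add: algebra_simps inner_diff_left inner_add_left)
  qed
qed

lemma proj_le: "norm (proj S X) \<le> norm X"
proof -
  have "(norm (proj S X))^2 \<le> (norm X)^2" using proj_pyth[of X S] by simp
  then show ?thesis by (simp add: power2_le_iff_abs_le)
qed

lemma proj_res_le: "norm (X - proj S X) \<le> norm X"
  using proj_best[of 0 S X] by simp

lemma proj_norm_bound: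
  assumes "B \<ge> 0" "\<And>Y. Y \<in> mspan S \<Longrightarrow> inner H Y \<le> B * norm Y"
  shows "norm (proj S H) \<le> B"
proof (cases "proj S H = 0")
  case True then show ?thesis using assms by simp
next
  case False
  have "(norm (proj S H))^2 = inner H (proj S H)"
    using inner_proj[OF proj_in[of S H], of H] by (simp add: power2_norm_eq_inner)
  also have "\<dots> \<le> B * norm (proj S H)" using assms(2)[OF proj_in] .
  finally show ?thesis using False by (simp add: power2_eq_square)
qed

lemma proj_compose:
  assumes "mspan T \<subseteq> mspan W"
  shows "proj T (proj W X) = proj T X"
proof -
  have "proj T X = proj T (proj W X)"
  proof (rule proj_char[symmetric])
    show "proj T X \<in> mspan T" by (rule proj_in)
    show "\<forall>Z\<in>mspan T. inner (proj W X - proj T X) Z = 0"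
    proof
      fix Z assume Z: "Z \<in> mspan T"
      then have "Z \<in> mspan W" using assms by blast
      then show "inner (proj W X - proj T X) Z = 0"
        using proj_orth[OF Z, of X] inner_proj[of Z W X] by (simp add: inner_diff_left)
    qed
  qed
  then show ?thesis by simp
qed


lemma row_eq: "row i A = A $ i"
  by (simp add: row_def vec_eq_iff)

lemma rank_le_card:
  fixes X :: "'a::field^'n::finite^'m::finite"
  assumes "finite W" "\<And>i. X $ i \<in> vec.span W"
  shows "rank X \<le> card W"
proof -
  have "rows X \<subseteq> vec.span W" using assms by (auto simp: rows_def row_eq)
  then show ?thesis unfolding row_rank_def_gen by (rule vec.dim_le_card[OF _ assms(1)])
qed

lemma rank_one_vec:
  fixes X :: "'a::field^'n::finite^'m::finite"
  assumes "rank X \<le> 1"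
  shows "\<exists>w. \<forall>i. X $ i \<in> vec.span {w}"
proof -
  obtain B where B: "B \<subseteq> rows X" "vec.independent B" "rows X \<subseteq> vec.span B" "card B = vec.dim (rows X)"
    using vec.basis_exists by blast
  have fin: "finite B" using B(2) vec.finiteI_independent by blast
  have "card B \<le> 1" using B(4) assms by (simp add: row_rank_def_gen)
  then obtain w where "B \<subseteq> {w}" using fin
    by (metis card_le_Suc0_iff_eq insert_absorb singleton_insert_inj_eq subset_insertI subset_iff  card_1_singletonE le_SucE  One_nat_def card_0_eq empty_subsetI le_zero_eq)
  then have "rows X \<subseteq> vec.span {w}" using B(3) vec.span_mono by blast
  then show ?thesis by (auto simp: rows_def row_eq)
qed

lemma smat_row: "(smat c X) $ i = c *s (X $ i)"
  by (simp add: smat_def vec_eq_iff)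

lemma sum_row: "(sum f S) $ i = sum (\<lambda>x. f x $ i) S"
  by (rule sum_component)

lemma rank_mspan:
  fixes X :: "('m::finite,'n::finite) cmat"
  assumes "finite F" "\<forall>\<psi>\<in>F. rank \<psi> \<le> 1" "X \<in> mspan F"
  shows "rank X \<le> card F"
proof -
  obtain c where X: "X = (\<Sum>\<psi>\<in>F. smat (c \<psi>) \<psi>)" using assms mspan_finite by blast
  have "\<forall>\<psi>\<in>F. \<exists>w. \<forall>i. \<psi> $ i \<in> vec.span {w}" using assms(2) rank_one_vec by blast
  then obtain w where w: "\<And>\<psi> i. \<psi> \<in> F \<Longrightarrow> \<psi> $ i \<in> vec.span {w \<psi>}" by metis
  have "rank X \<le> card (w ` F)"
  proof (rule rank_le_card)
    show "finite (w ` F)" using assms by simp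
    fix i
    have "\<And>\<psi>. \<psi> \<in> F \<Longrightarrow> (smat (c \<psi>) \<psi>) $ i \<in> vec.span (w ` F)"
    proof -
      fix \<psi> assume "\<psi> \<in> F"
      then have "\<psi> $ i \<in> vec.span (w ` F)" using w vec.span_mono[of "{w \<psi>}" "w ` F"] by blast
      then show "(smat (c \<psi>) \<psi>) $ i \<in> vec.span (w ` F)" by (simp add: smat_row vec.span_scale)
    qed
    then show "X $ i \<in> vec.span (w ` F)" unfolding X sum_row by (rule vec.span_sum)
  qed
  also have "\<dots> \<le> card F" using assms(1) card_image_le by blast
  finally show ?thesis .
qed

lemma rank_atoms:
  assumes "atom_set Ats" "finite F" "F \<subseteq> Ats" "X \<in> mspan F"
  shows "rank X \<le> card F"
  using assms by (intro rank_mspan) (auto simp: atom_set_def)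

lemma rank_decomp:
  fixes X :: "('m::finite,'n::finite) cmat"
  assumes ats: "atom_set Ats" and rk: "rank X \<le> r"
  shows "\<exists>F. F \<subseteq> Ats \<and> finite F \<and> card F \<le> r \<and> X \<in> mspan F"
proof -
  obtain B where B: "B \<subseteq> rows X" "vec.independent B" "rows X \<subseteq> vec.span B" "card B = vec.dim (rows X)"
    using vec.basis_exists by blast
  have fin: "finite B" using B(2) vec.finiteI_independent by blast
  have "\<forall>i. \<exists>u. X $ i = (\<Sum>v\<in>B. u v *s v)"
  proof
    fix i have "X $ i \<in> vec.span B" using B(3) by (auto simp: rows_def row_eq)
    then show "\<exists>u. X $ i = (\<Sum>v\<in>B. u v *s v)" using vec.span_finite[OF fin] by auto
  qed
  then obtain c where c: "\<And>i. X $ i = (\<Sum>v\<in>B. c i v *s v)" by metis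
  define M where "M b = (\<chi> i j. c i b * b $ j)" for b :: "complex^'n"
  have XM: "X = (\<Sum>b\<in>B. M b)"
    by (simp add: vec_eq_iff M_def sum_component c)
  have Mrow: "M b $ i = c i b *s b" for b i by (simp add: M_def vec_eq_iff)
  have rk1: "rank (M b) = 1" if "M b \<noteq> 0" for b
  proof -
    have "rank (M b) \<le> card {b}"
      by (rule rank_le_card) (auto simp: Mrow intro: vec.span_scale vec.span_base)
    moreover have "rank (M b) \<noteq> 0"
    proof
      assume "rank (M b) = 0"
      then have "rows (M b) \<subseteq> {0}" by (simp add: row_rank_def_gen)
      then have "\<forall>i. M b $ i = 0" by (auto simp: rows_def row_eq)
      then show False using that by (simp add: vec_eq_iff)
    qed
    ultimately show ?thesis by simp
  qed
  define psi where "psi b = (SOME \<psi>. \<psi> \<in> Ats \<and> (\<exists>a. M b = smat a \<psi>))" for b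
  have psi: "psi b \<in> Ats \<and> (\<exists>a. M b = smat a (psi b))" if "M b \<noteq> 0" for b
  proof -
    have "\<exists>\<psi>. \<psi> \<in> Ats \<and> (\<exists>a. M b = smat a \<psi>)" using ats rk1[OF that] unfolding atom_set_def by blast
    then show ?thesis unfolding psi_def by (rule someI_ex)
  qed
  define F where "F = psi ` {b\<in>B. M b \<noteq> 0}"
  have "F \<subseteq> Ats" using psi by (auto simp: F_def)
  moreover have "finite F" using fin by (simp add: F_def)
  moreover have "card F \<le> r"
  proof -
    have "card F \<le> card {b\<in>B. M b \<noteq> 0}" unfolding F_def by (rule card_image_le) (simp add: fin)
    also have "\<dots> \<le> card B" using fin by (intro card_mono) auto
    also have "\<dots> \<le> r" using B(4) rk by (simp add: row_rank_def_gen)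
    finally show ?thesis .
  qed
  moreover have "X \<in> mspan F"
    unfolding XM
  proof (rule mspan_sum[OF fin])
    fix b assume "b \<in> B"
    show "M b \<in> mspan F"
    proof (cases "M b = 0")
      case True then show ?thesis by simp
    next
      case False
      then obtain a where a: "M b = smat a (psi b)" using psi by blast
      have "psi b \<in> F" using False \<open>b \<in> B\<close> by (auto simp: F_def)
      then show ?thesis unfolding a by (intro mspan_smat mspan_base)
    qed
  qed
  ultimately show ?thesis by blast
qed


lemma cinner_vec_svec_left: "cinner_vec (svec c x) y = c * cinner_vec x y"
  by (simp add: cinner_vec_def svec_def sum_distrib_left algebra_simps)

lemma cinner_mat_diff_right: "cinner_mat X (Y - Z) = cinner_mat X Y - cinner_mat X Z"
  by (simp add: cinner_mat_def sum_subtractf algebra_simps)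

lemma cinner_mat_self_eq0: "cinner_mat W W = 0 \<Longrightarrow> W = 0"
proof -
  assume "cinner_mat W W = 0"
  then have "inner W W = 0" by (simp add: inner_mat_Re)
  then show "W = 0" by simp
qed

lemma Im_cinner_vec: "Im (cinner_vec a y) = inner (svec (-\<i>) a) y"
  by (simp add: inner_vec_Re cinner_vec_svec_left)

lemma Im_cinner_mat: "Im (cinner_mat X Z) = inner (smat (-\<i>) X) Z"
  by (simp add: inner_mat_Re cinner_mat_smat_left)

lemma adjoint_prop:
  fixes A :: "('m::finite,'n::finite) cmat \<Rightarrow> complex^'p::finite"
  assumes lin: "clinear_op A"
  shows "inner X (adjoint_op A y) = inner (A X) y"
proof -
  have la: "linear A" using lin by (rule clinear_linear)
  define Z where "Z = adjoint A y"
  have Zr: "inner X Z = inner (A X) y" for X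
    unfolding Z_def by (rule adjoint_works[OF la])
  have Zc: "cinner_vec (A X) y = cinner_mat X Z" for X
  proof (rule complex_eqI)
    show "Re (cinner_vec (A X) y) = Re (cinner_mat X Z)"
      using Zr[of X] by (simp add: inner_vec_Re inner_mat_Re)
    have "A (smat (-\<i>) X) = svec (-\<i>) (A X)" using lin by (simp add: clinear_op_def)
    then show "Im (cinner_vec (A X) y) = Im (cinner_mat X Z)"
      using Zr[of "smat (-\<i>) X"] by (simp add: Im_cinner_vec Im_cinner_mat)
  qed
  have "adjoint_op A y = Z"
    unfolding adjoint_op_def
  proof (rule the_equality)
    show "\<forall>X. cinner_vec (A X) y = cinner_mat X Z" using Zc by blast
  next
    fix Z' assume "\<forall>X. cinner_vec (A X) y = cinner_mat X Z'"
    then have "cinner_mat (Z' - Z) (Z' - Z) = 0" using Zc by (simp add: cinner_mat_diff_right)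
    then show "Z' = Z" using cinner_mat_self_eq0 by fastforce
  qed
  then show ?thesis using Zr by simp
qed

lemma rip_prop:
  fixes A :: "('m::finite,'n::finite) cmat \<Rightarrow> complex^'p::finite"
  assumes lin: "clinear_op A"
  shows "rip_const A s \<ge> 0"
    and "rank X \<le> s \<Longrightarrow> (1 - rip_const A s) * (norm X)^2 \<le> (norm (A X))^2"
    and "rank X \<le> s \<Longrightarrow> (norm (A X))^2 \<le> (1 + rip_const A s) * (norm X)^2"
proof -
  have la: "linear A" using lin by (rule clinear_linear)
  then have "bounded_linear A" by (simp add: linear_conv_bounded_linear)
  then obtain K where K: "K > 0" "\<And>x. norm (A x) \<le> norm x * K"
    using bounded_linear.pos_bounded by blast
  define S where "S = {\<delta>. \<delta> \<ge> 0 \<and> (\<forall>X. rank X \<le> s \<longrightarrow>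
      (1 - \<delta>) * (norm X)^2 \<le> (norm (A X))^2 \<and> (norm (A X))^2 \<le> (1 + \<delta>) * (norm X)^2)}"
  have rc: "rip_const A s = Inf S" unfolding S_def rip_const_def by simp
  have "1 + K^2 \<in> S"
  proof -
    have "(norm (A X))^2 \<le> (1 + (1 + K^2)) * (norm X)^2" for X
    proof -
      have "norm (A X) \<le> norm X * K" by (rule K(2))
      then have "(norm (A X))^2 \<le> (norm X * K)^2" by (simp add: power_mono)
      also have "\<dots> \<le> (1 + (1 + K^2)) * (norm X)^2" by (simp add: power_mult_distrib algebra_simps)
      finally show ?thesis .
    qed
    moreover have "(1 - (1 + K^2)) * (norm X)^2 \<le> (norm (A X))^2" for X :: "('m,'n) cmat"
    proof -
      have "(1 - (1 + K^2)) * (norm X)^2 \<le> 0" by (simp add: mult_nonpos_nonneg)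
      then show ?thesis by (smt (verit) zero_le_power2)
    qed
    ultimately show ?thesis unfolding S_def by (simp add: add_nonneg_nonneg)
  qed
  then have ne: "S \<noteq> {}" by blast
  have bdd: "bdd_below S" unfolding S_def by (rule bdd_belowI[of _ 0]) auto
  show "rip_const A s \<ge> 0" unfolding rc by (rule cInf_greatest[OF ne]) (auto simp: S_def)
  assume rk: "rank X \<le> s"
  show "(1 - rip_const A s) * (norm X)^2 \<le> (norm (A X))^2"
  proof (cases "X = 0")
    case True then show ?thesis using la by (simp add: linear_0)
  next
    case False
    then have n: "(norm X)^2 > 0" by simp
    have "1 - (norm (A X))^2 / (norm X)^2 \<le> Inf S"
    proof (rule cInf_greatest[OF ne])
      fix d assume "d \<in> S"
      then have "(1 - d) * (norm X)^2 \<le> (norm (A X))^2" using rk unfolding S_def by blast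
      then show "1 - (norm (A X))^2 / (norm X)^2 \<le> d" using n by (simp add: field_simps)
    qed
    then show ?thesis using n unfolding rc by (simp add: field_simps)
  qed
  show "(norm (A X))^2 \<le> (1 + rip_const A s) * (norm X)^2"
  proof (cases "X = 0")
    case True then show ?thesis using la by (simp add: linear_0)
  next
    case False
    then have n: "(norm X)^2 > 0" by simp
    have "(norm (A X))^2 / (norm X)^2 - 1 \<le> Inf S"
    proof (rule cInf_greatest[OF ne])
      fix d assume "d \<in> S"
      then have "(norm (A X))^2 \<le> (1 + d) * (norm X)^2" using rk unfolding S_def by blast
      then show "(norm (A X))^2 / (norm X)^2 - 1 \<le> d" using n by (simp add: field_simps)
    qed
    then show ?thesis using n unfolding rc by (simp add: field_simps)
  qed
qed

lemma inner_sq_expand: "(norm (a + b))^2 = (norm a)^2 + 2 * inner a b + (norm b)^2"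
                        "(norm (a - b))^2 = (norm a)^2 - 2 * inner a b + (norm b)^2"
  for a b :: "'a::real_inner"
  by (simp_all add: power2_norm_eq_inner inner_add_left inner_add_right inner_diff_left inner_diff_right inner_commute)

lemma rip_cross_unit:
  fixes A :: "'a::real_inner \<Rightarrow> 'b::real_inner"
  assumes la: "linear A" and d: "\<delta> \<ge> 0"
    and rp: "\<And>Z. Z \<in> V \<Longrightarrow> (1 - \<delta>) * (norm Z)^2 \<le> (norm (A Z))^2 \<and> (norm (A Z))^2 \<le> (1 + \<delta>) * (norm Z)^2"
    and D: "D + Y \<in> V" "D - Y \<in> V" and n: "norm D = 1" "norm Y = 1"
  shows "\<bar>inner (A D) (A Y) - inner D Y\<bar> \<le> \<delta>"
proof -
  have e1: "(norm (A D + A Y))^2 - (norm (A D - A Y))^2 = 4 * inner (A D) (A Y)"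
    by (simp add: inner_sq_expand)
  have e2: "(norm (D + Y))^2 - (norm (D - Y))^2 = 4 * inner D Y"
    by (simp add: inner_sq_expand)
  have e3: "(norm (D + Y))^2 + (norm (D - Y))^2 = 4"
    using n by (simp add: inner_sq_expand)
  have p1: "A (D + Y) = A D + A Y" "A (D - Y) = A D - A Y" using la by (simp_all add: linear_add linear_diff)
  define a where "a = (norm (D + Y))^2"
  define b where "b = (norm (D - Y))^2"
  define \<alpha> where "\<alpha> = (norm (A D + A Y))^2"
  define \<beta> where "\<beta> = (norm (A D - A Y))^2"
  have r1: "(1 - \<delta>) * a \<le> \<alpha>" "\<alpha> \<le> (1 + \<delta>) * a" using rp[OF D(1)] p1 by (auto simp: a_def \<alpha>_def)
  have r2: "(1 - \<delta>) * b \<le> \<beta>" "\<beta> \<le> (1 + \<delta>) * b" using rp[OF D(2)] p1 by (auto simp: b_def \<beta>_def)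
  have s4: "\<delta> * a + \<delta> * b = 4 * \<delta>" using e3 by (simp add: a_def b_def distrib_left[symmetric])
  have "4 * (inner (A D) (A Y) - inner D Y) = (\<alpha> - a) - (\<beta> - b)"
    using e1 e2 by (simp add: a_def b_def \<alpha>_def \<beta>_def algebra_simps)
  moreover have "\<bar>(\<alpha> - a) - (\<beta> - b)\<bar> \<le> 4 * \<delta>"
    using r1 r2 s4 by (simp add: algebra_simps abs_le_iff)
  ultimately show ?thesis by simp
qed

lemma rip_cross:
  fixes A :: "'a::real_inner \<Rightarrow> 'b::real_inner"
  assumes la: "linear A" and d: "\<delta> \<ge> 0"
    and rp: "\<And>Z. Z \<in> V \<Longrightarrow> (1 - \<delta>) * (norm Z)^2 \<le> (norm (A Z))^2 \<and> (norm (A Z))^2 \<le> (1 + \<delta>) * (norm Z)^2"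
    and V: "subspace V" and D: "D \<in> V" "Y \<in> V"
  shows "\<bar>inner (A D) (A Y) - inner D Y\<bar> \<le> \<delta> * norm D * norm Y"
proof (cases "D = 0 \<or> Y = 0")
  case True then show ?thesis using la by (auto simp: linear_0)
next
  case False
  define D' where "D' = (1 / norm D) *\<^sub>R D"
  define Y' where "Y' = (1 / norm Y) *\<^sub>R Y"
  have n: "norm D' = 1" "norm Y' = 1" using False by (auto simp: D'_def Y'_def)
  have "D' \<in> V" "Y' \<in> V" using V D by (auto simp: D'_def Y'_def subspace_scale)
  then have "D' + Y' \<in> V" "D' - Y' \<in> V" using V by (auto simp: subspace_add subspace_diff)
  then have u: "\<bar>inner (A D') (A Y') - inner D' Y'\<bar> \<le> \<delta>"
    by (intro rip_cross_unit[OF la d rp] n) auto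
  have "inner (A D) (A Y) - inner D Y = (norm D * norm Y) * (inner (A D') (A Y') - inner D' Y')"
    using False la by (simp add: D'_def Y'_def linear_scale algebra_simps)
  then have "\<bar>inner (A D) (A Y) - inner D Y\<bar> = (norm D * norm Y) * \<bar>inner (A D') (A Y') - inner D' Y'\<bar>"
    by (simp add: abs_mult)
  also have "\<dots> \<le> (norm D * norm Y) * \<delta>" using u by (simp add: mult_left_mono)
  finally show ?thesis by (simp add: algebra_simps)
qed


lemma first_order:
  fixes A :: "'a::real_inner \<Rightarrow> 'b::real_inner"
  assumes la: "linear A" and V: "subspace V" and xt: "Xt \<in> V"
    and mn: "\<forall>X\<in>V. norm (b - A Xt) \<le> norm (b - A X)" and Y: "Y \<in> V"
  shows "inner (b - A Xt) (A Y) = 0"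
proof (rule ccontr)
  define q where "q = inner (b - A Xt) (A Y)"
  define a where "a = (norm (A Y))^2"
  assume "inner (b - A Xt) (A Y) \<noteq> 0"
  then have q0: "q \<noteq> 0" by (simp add: q_def)
  have a0: "a \<ge> 0" by (simp add: a_def)
  define t where "t = q / (a + 1)"
  have "Xt + t *\<^sub>R Y \<in> V" using V xt Y by (simp add: subspace_add subspace_scale)
  then have "norm (b - A Xt) \<le> norm (b - A (Xt + t *\<^sub>R Y))" using mn by blast
  also have "b - A (Xt + t *\<^sub>R Y) = (b - A Xt) - t *\<^sub>R A Y" using la by (simp add: linear_add linear_scale)
  finally have "(norm (b - A Xt))^2 \<le> (norm ((b - A Xt) - t *\<^sub>R A Y))^2"
    by (simp add: power_mono)
  then have "0 \<le> - 2 * t * q + t^2 * a"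
    by (simp add: inner_sq_expand q_def a_def power_mult_distrib algebra_simps)
  then have "0 \<le> (- 2 * t * q + t^2 * a) * (a + 1)^2" using a0 by simp
  also have ta: "t * (a + 1) = q" using a0 by (simp add: t_def)
  have "(- 2 * t * q + t^2 * a) * (a + 1)^2 = - 2 * q * (t * (a + 1)) * (a + 1) + (t * (a + 1))^2 * a"
    by (simp add: power2_eq_square algebra_simps)
  also have "\<dots> = - (q^2 * (a + 2))" by (simp only: ta) (simp add: power2_eq_square algebra_simps)
  finally have "q^2 * (a + 2) \<le> 0" by simp
  moreover have "q^2 * (a + 2) > 0" using q0 a0 by simp
  ultimately show False by simp
qed

context
  fixes Ats :: "('m::finite,'n::finite) cmat set" and A :: "('m,'n) cmat \<Rightarrow> complex^'p::finite" and r :: nat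
  assumes lin: "clinear_op A" and ats: "atom_set Ats"
begin

lemma la: "linear A" using lin by (rule clinear_linear)

lemma rip_span:
  assumes "finite F" "F \<subseteq> Ats" "card F \<le> 4 * r" "Z \<in> mspan F"
  shows "(1 - rip_const A (4*r)) * (norm Z)^2 \<le> (norm (A Z))^2 \<and> (norm (A Z))^2 \<le> (1 + rip_const A (4*r)) * (norm Z)^2"
proof -
  have "rank Z \<le> 4 * r" using rank_atoms[OF ats assms(1,2,4)] assms(3) by simp
  then show ?thesis using rip_prop[OF lin] by blast
qed

lemma rip_upper:
  assumes "rip_const A (4*r) \<le> 0.04" "finite F" "F \<subseteq> Ats" "card F \<le> 4 * r" "Z \<in> mspan F"
  shows "norm (A Z) \<le> 1.02 * norm Z"
proof -
  have "(norm (A Z))^2 \<le> (1 + rip_const A (4*r)) * (norm Z)^2" using rip_span[OF assms(2-5)] by blast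
  also have "\<dots> \<le> 1.0404 * (norm Z)^2" using assms(1) by (intro mult_right_mono) auto
  also have "\<dots> = (1.02 * norm Z)^2" by (simp add: power2_eq_square algebra_simps)
  finally show ?thesis by (simp add: power2_le_iff_abs_le)
qed

lemma rip_cross_span:
  assumes "finite F" "F \<subseteq> Ats" "card F \<le> 4 * r" "D \<in> mspan F" "Y \<in> mspan F"
  shows "\<bar>inner (A D) (A Y) - inner D Y\<bar> \<le> rip_const A (4*r) * norm D * norm Y"
  by (rule rip_cross[OF la rip_prop(1)[OF lin] _ subspace_mspan assms(4,5)]) (rule rip_span[OF assms(1-3)])

lemma card_un_le: "finite S \<Longrightarrow> finite T \<Longrightarrow> card (S \<union> T) \<le> card S + card T"
  by (simp add: card_Un_le)

lemma step_bound:
  assumes rip: "rip_const A (4*r) \<le> 0.04"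
    and Xs: "finite \<Psi>s" "\<Psi>s \<subseteq> Ats" "card \<Psi>s \<le> r" "X \<in> mspan \<Psi>s"
    and b: "b = A X + e"
    and Xk: "finite \<Psi>k" "\<Psi>k \<subseteq> Ats" "card \<Psi>k \<le> r" "Xk \<in> mspan \<Psi>k"
    and b1: "best_atoms Ats (2*r) (adjoint_op A (b - A Xk)) \<Psi>'"
    and xt: "Xt \<in> mspan (\<Psi>' \<union> \<Psi>k)" "\<forall>Y\<in>mspan (\<Psi>' \<union> \<Psi>k). norm (b - A Xt) \<le> norm (b - A Y)"
    and b2: "best_atoms Ats r Xt \<Psi>n"
  shows "norm (X - proj \<Psi>n Xt) \<le> (1/6) * norm (X - Xk) + (51/8) * norm e"
proof -
  define \<delta> where "\<delta> = rip_const A (4*r)"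
  have d0: "\<delta> \<ge> 0" unfolding \<delta>_def by (rule rip_prop(1)[OF lin])
  have d1: "\<delta> \<le> 0.04" using rip by (simp add: \<delta>_def)
  have T: "finite \<Psi>'" "\<Psi>' \<subseteq> Ats" "card \<Psi>' \<le> 2*r" using b1 by (auto simp: best_atoms_def)
  define D where "D = X - Xk"
  define \<Phi> where "\<Phi> = \<Psi>s \<union> \<Psi>k"
  define W where "W = \<Phi> \<union> \<Psi>'"
  have Phi: "finite \<Phi>" "\<Phi> \<subseteq> Ats" "card \<Phi> \<le> 2*r"
    using Xs Xk card_un_le[of \<Psi>s \<Psi>k] by (auto simp: \<Phi>_def)
  have Wf: "finite W" "W \<subseteq> Ats" "card W \<le> 4*r"
    using Phi T card_un_le[of \<Phi> \<Psi>'] by (auto simp: W_def)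
  have DPhi: "D \<in> mspan \<Phi>" unfolding D_def \<Phi>_def
    using Xs(4) Xk(4) mspan_mono[of \<Psi>s "\<Psi>s \<union> \<Psi>k"] mspan_mono[of \<Psi>k "\<Psi>s \<union> \<Psi>k"]
    by (intro mspan_diff) auto
  have PhiW: "mspan \<Phi> \<subseteq> mspan W" "mspan \<Psi>' \<subseteq> mspan W" by (auto simp: W_def intro!: mspan_mono)
  have DW: "D \<in> mspan W" using DPhi PhiW by blast
  define R where "R = adjoint_op A (b - A Xk)"
  have bAX: "b - A Xk = A D + e" using la by (simp add: b D_def linear_diff)
  have innR: "inner R Y = inner (A D) (A Y) + inner e (A Y)" for Y
    unfolding R_def inner_commute[of _ Y] adjoint_prop[OF lin] bAX by (simp add: inner_add_right inner_commute)
  define G where "G = proj W R"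
  define H where "H = G - D"
  have HW: "H \<in> mspan W" unfolding H_def G_def using DW proj_in by (rule mspan_diff[rotated])
  define h where "h = \<delta> * norm D + 1.02 * norm e"
  have h0: "h \<ge> 0" using d0 by (simp add: h_def)
  have "norm (proj W H) \<le> h"
  proof (rule proj_norm_bound[OF h0])
    fix Y assume Y: "Y \<in> mspan W"
    have "inner H Y = inner R Y - inner D Y" unfolding H_def G_def using inner_proj[OF Y]
      by (simp add: inner_diff_left)
    also have "\<dots> = (inner (A D) (A Y) - inner D Y) + inner e (A Y)" by (simp add: innR)
    also have "\<dots> \<le> \<delta> * norm D * norm Y + norm e * (1.02 * norm Y)"
    proof (rule add_mono)
      show "inner (A D) (A Y) - inner D Y \<le> \<delta> * norm D * norm Y"
        using rip_cross_span[OF Wf DW Y] by (simp add: \<delta>_def)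
      have "inner e (A Y) \<le> norm e * norm (A Y)" by (rule norm_cauchy_schwarz)
      also have "\<dots> \<le> norm e * (1.02 * norm Y)" using rip_upper[OF rip Wf Y] by (intro mult_left_mono) auto
      finally show "inner e (A Y) \<le> norm e * (1.02 * norm Y)" .
    qed
    also have "\<dots> = h * norm Y" by (simp add: h_def algebra_simps)
    finally show "inner H Y \<le> h * norm Y" .
  qed
  moreover have "proj W H = H" by (rule proj_char[OF HW]) simp
  ultimately have Hh: "norm H \<le> h" by simp
  have "norm (proj \<Phi> R) \<le> norm (proj \<Psi>' R)" using b1 Phi unfolding best_atoms_def R_def by blast
  moreover have "proj \<Phi> R = proj \<Phi> G" "proj \<Psi>' R = proj \<Psi>' G"
    unfolding G_def using PhiW by (simp_all add: proj_compose)
  ultimately have cmp: "norm (proj \<Phi> G) \<le> norm (proj \<Psi>' G)" by simp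
  have "(norm (G - proj \<Psi>' G))^2 = (norm G)^2 - (norm (proj \<Psi>' G))^2" using proj_pyth[of G \<Psi>'] by simp
  also have "\<dots> \<le> (norm G)^2 - (norm (proj \<Phi> G))^2" using cmp by (simp add: power_mono)
  also have "\<dots> = (norm (G - proj \<Phi> G))^2" using proj_pyth[of G \<Phi>] by simp
  also have "\<dots> \<le> (norm (G - D))^2" using proj_best[OF DPhi, of G] by (simp add: power_mono)
  finally have "norm (G - proj \<Psi>' G) \<le> norm H" by (simp add: H_def power2_le_iff_abs_le)
  define c where "c = norm (D - proj \<Psi>' D)"
  have "D - proj \<Psi>' D = (G - proj \<Psi>' G) - (H - proj \<Psi>' H)"
    by (simp add: H_def proj_diff)
  then have "c \<le> norm (G - proj \<Psi>' G) + norm (H - proj \<Psi>' H)" unfolding c_def by (simp add: norm_triangle_ineq4)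
  also have "\<dots> \<le> norm H + norm H" using \<open>norm (G - proj \<Psi>' G) \<le> norm H\<close> proj_res_le[of H \<Psi>'] by simp
  finally have cb: "c \<le> 2 * \<delta> * norm D + 2.04 * norm e" using Hh by (simp add: h_def)
  define U where "U = \<Psi>' \<union> \<Psi>k"
  have Uf: "finite U" "U \<subseteq> Ats" using T Xk by (auto simp: U_def)
  have xtU: "Xt \<in> mspan U" using xt by (simp add: U_def)
  define PX where "PX = proj U X"
  define c' where "c' = norm (X - PX)"
  have "Xk + proj \<Psi>' D \<in> mspan U" unfolding U_def
    using Xk(4) proj_in[of \<Psi>' D] mspan_mono[of \<Psi>k "\<Psi>' \<union> \<Psi>k"] mspan_mono[of \<Psi>' "\<Psi>' \<union> \<Psi>k"]
    by (intro mspan_add) auto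
  then have "c' \<le> norm (X - (Xk + proj \<Psi>' D))" unfolding c'_def PX_def by (rule proj_best)
  also have "X - (Xk + proj \<Psi>' D) = D - proj \<Psi>' D" by (simp add: D_def)
  finally have c'c: "c' \<le> c" by (simp add: c_def)
  define Z where "Z = Xt - PX"
  have ZU: "Z \<in> mspan U" unfolding Z_def PX_def using xtU proj_in by (rule mspan_diff)
  define V2 where "V2 = \<Psi>s \<union> U"
  have cU: "card U \<le> card \<Psi>' + card \<Psi>k" using card_un_le[of \<Psi>' \<Psi>k] T Xk by (simp add: U_def)
  have cV: "card V2 \<le> card \<Psi>s + card U" using card_un_le[of \<Psi>s U] Xs Uf by (simp add: V2_def)
  have V2f: "finite V2" "V2 \<subseteq> Ats" "card V2 \<le> 4*r"
    using Xs Uf T Xk cU cV by (auto simp: V2_def)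
  have UV2: "mspan U \<subseteq> mspan V2" "mspan \<Psi>s \<subseteq> mspan V2" by (auto simp: V2_def intro!: mspan_mono)
  have ZV2: "Z \<in> mspan V2" using ZU UV2 by blast
  have XPV2: "X - PX \<in> mspan V2" using Xs(4) UV2 proj_in[of U X] unfolding PX_def by (intro mspan_diff) auto
  have fo: "inner (b - A Xt) (A Z) = 0"
    by (rule first_order[OF la subspace_mspan xtU _ ZU]) (use xt in \<open>simp add: U_def\<close>)
  have "A (X - PX) - A Z + e = A X + e - A Xt" using la by (simp add: Z_def linear_diff)
  then have "b - A Xt = A (X - PX) - A Z + e" by (simp add: b)
  then have "inner (A Z) (A Z) = inner (A (X - PX)) (A Z) + inner e (A Z)"
    using fo by (simp add: inner_diff_left inner_add_left)
  moreover have "inner (A (X - PX)) (A Z) \<le> \<delta> * c' * norm Z"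
  proof -
    have "inner (X - PX) Z = 0" unfolding PX_def by (rule proj_orth[OF ZU])
    then show ?thesis using rip_cross_span[OF V2f XPV2 ZV2] by (simp add: \<delta>_def c'_def)
  qed
  moreover have "inner e (A Z) \<le> norm e * (1.02 * norm Z)"
  proof -
    have "inner e (A Z) \<le> norm e * norm (A Z)" by (rule norm_cauchy_schwarz)
    also have "\<dots> \<le> norm e * (1.02 * norm Z)" using rip_upper[OF rip V2f ZV2] by (intro mult_left_mono) auto
    finally show ?thesis .
  qed
  moreover have "(1 - \<delta>) * (norm Z)^2 \<le> inner (A Z) (A Z)"
    using rip_span[OF V2f ZV2] by (simp add: \<delta>_def power2_norm_eq_inner)
  moreover have "(1 - \<delta>) * norm Z * norm Z = (1 - \<delta>) * (norm Z)^2" by (simp add: power2_eq_square)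
  moreover have "(\<delta> * c' + 1.02 * norm e) * norm Z = \<delta> * c' * norm Z + norm e * (1.02 * norm Z)"
    by (simp add: algebra_simps)
  ultimately have Zm: "(1 - \<delta>) * norm Z * norm Z \<le> (\<delta> * c' + 1.02 * norm e) * norm Z"
    by linarith
  have Zb: "(1 - \<delta>) * norm Z \<le> \<delta> * c' + 1.02 * norm e"
  proof (cases "norm Z = 0")
    case True then show ?thesis using d0 by (simp add: c'_def)
  next
    case False then have "norm Z > 0" by simp
    then show ?thesis using Zm by (rule mult_right_le_imp_le[rotated])
  qed
  have "norm (X - Xt) \<le> c' + norm Z"
  proof -
    have "X - Xt = (X - PX) - Z" by (simp add: Z_def)
    then show ?thesis unfolding c'_def using norm_triangle_ineq4[of "X - PX" Z] by metis
  qed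
  have "(norm (Xt - proj \<Psi>n Xt))^2 = (norm Xt)^2 - (norm (proj \<Psi>n Xt))^2" using proj_pyth[of Xt \<Psi>n] by simp
  also have "\<dots> \<le> (norm Xt)^2 - (norm (proj \<Psi>s Xt))^2"
    using b2 Xs unfolding best_atoms_def by (simp add: power_mono)
  also have "\<dots> = (norm (Xt - proj \<Psi>s Xt))^2" using proj_pyth[of Xt \<Psi>s] by simp
  also have "\<dots> \<le> (norm (Xt - X))^2" using proj_best[OF Xs(4), of Xt] by (simp add: power_mono)
  finally have "norm (Xt - proj \<Psi>n Xt) \<le> norm (X - Xt)" by (simp add: power2_le_iff_abs_le norm_minus_commute)
  then have "norm (X - proj \<Psi>n Xt) \<le> 2 * norm (X - Xt)"
    using norm_triangle_ineq[of "X - Xt" "Xt - proj \<Psi>n Xt"] by simp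
  have s0: "c' + norm Z \<ge> 0" by (simp add: c'_def)
  have "(1 - \<delta>) * (c' + norm Z) \<le> c' + 1.02 * norm e" using Zb by (simp add: algebra_simps)
  also have "\<dots> \<le> 2 * \<delta> * norm D + 3.06 * norm e" using c'c cb by simp
  also have "\<dots> \<le> 0.08 * norm D + 3.06 * norm e"
  proof -
    have "\<delta> * norm D \<le> 0.04 * norm D" using d1 by (intro mult_right_mono) auto
    then show ?thesis by simp
  qed
  finally have "(1 - \<delta>) * (c' + norm Z) \<le> 0.08 * norm D + 3.06 * norm e" .
  moreover have "0.96 * (c' + norm Z) \<le> (1 - \<delta>) * (c' + norm Z)" using d1 s0 by (intro mult_right_mono) auto
  ultimately have "0.96 * (c' + norm Z) \<le> 0.08 * norm D + 3.06 * norm e" by linarith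
  then have "2 * (c' + norm Z) \<le> (1/6) * norm D + (51/8) * norm e" by simp
  then show ?thesis using \<open>norm (X - proj \<Psi>n Xt) \<le> 2 * norm (X - Xt)\<close> \<open>norm (X - Xt) \<le> c' + norm Z\<close>
    by (simp add: D_def)
qed

end


lemma cv_self: "cinner_vec x x = complex_of_real ((norm x)^2)"
proof (rule complex_eqI)
  show "Re (cinner_vec x x) = Re (complex_of_real ((norm x)\<^sup>2))"
    by (simp add: inner_vec_Re[symmetric] power2_norm_eq_inner)
  show "Im (cinner_vec x x) = Im (complex_of_real ((norm x)\<^sup>2))"
    by (simp add: cinner_vec_def Im_sum)
qed

lemma cv_commute: "cinner_vec y x = cnj (cinner_vec x y)"
  by (simp add: cinner_vec_def cnj_sum mult.commute)

lemma cv_add_left: "cinner_vec (x + y) z = cinner_vec x z + cinner_vec y z"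
  by (simp add: cinner_vec_def sum.distrib algebra_simps)
lemma cv_add_right: "cinner_vec z (x + y) = cinner_vec z x + cinner_vec z y"
  by (simp add: cinner_vec_def sum.distrib algebra_simps)
lemma cv_diff_left: "cinner_vec (x - y) z = cinner_vec x z - cinner_vec y z"
  by (simp add: cinner_vec_def sum_subtractf algebra_simps)
lemma cv_diff_right: "cinner_vec z (x - y) = cinner_vec z x - cinner_vec z y"
  by (simp add: cinner_vec_def sum_subtractf algebra_simps)
lemma cv_scale_left: "cinner_vec (c *s x) y = c * cinner_vec x y"
  by (simp add: cinner_vec_def sum_distrib_left algebra_simps)
lemma cv_scale_right: "cinner_vec x (c *s y) = cnj c * cinner_vec x y"
  by (simp add: cinner_vec_def sum_distrib_left algebra_simps)
lemma cv_zero_left[simp]: "cinner_vec 0 y = 0"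
  by (simp add: cinner_vec_def)
lemma cv_zero_right[simp]: "cinner_vec y 0 = 0"
  by (simp add: cinner_vec_def)
lemma cv_sum_left: "cinner_vec (sum f S) y = (\<Sum>i\<in>S. cinner_vec (f i) y)"
  by (induct S rule: infinite_finite_induct) (auto simp: cv_add_left)
lemma cv_sum_right: "cinner_vec y (sum f S) = (\<Sum>i\<in>S. cinner_vec y (f i))"
  by (induct S rule: infinite_finite_induct) (auto simp: cv_add_right)

lemma norm_scale_vec: "norm (c *s (x::complex^'n::finite)) = cmod c * norm x"
proof -
  have "cinner_vec (c *s x) (c *s x) = (c * cnj c) * cinner_vec x x"
    by (simp add: cv_scale_left cv_scale_right)
  also have "c * cnj c = complex_of_real ((cmod c)^2)" by (rule complex_norm_square[symmetric])
  then have "(c * cnj c) * cinner_vec x x = complex_of_real ((cmod c)^2 * (norm x)^2)" by (simp add: cv_self)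
  finally have "(norm (c *s x))^2 = (cmod c)^2 * (norm x)^2"
    by (simp only: cv_self of_real_eq_iff)
  then have "(norm (c *s x))^2 = (cmod c * norm x)^2" by (simp add: power_mult_distrib)
  then show ?thesis by (simp add: power2_eq_iff_nonneg)
qed

lemma mv_scale: "(Y::complex^'n::finite^'m::finite) *v (c *s x) = c *s (Y *v x)"
  unfolding matrix_vector_mult_def vector_scalar_mult_def
  by (simp add: vec_eq_iff sum_distrib_left) (intro allI sum.cong refl, simp add: mult.left_commute)

lemma scaleR_as_scale: "r *\<^sub>R (x::complex^'n::finite) = complex_of_real r *s x"
  by (simp add: vec_eq_iff vector_scalar_mult_def) (simp add: scaleR_conv_of_real)

lemma mv_linear: "linear (\<lambda>w. (Y::complex^'n::finite^'m::finite) *v w)"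
  by (rule linearI) (simp_all add: matrix_vector_right_distrib scaleR_as_scale mv_scale)

lemma mv_cont: "continuous_on S (\<lambda>w. norm ((Y::complex^'n::finite^'m::finite) *v w))"
proof -
  have "bounded_linear (\<lambda>w. Y *v w)" using mv_linear linear_conv_bounded_linear by blast
  then show ?thesis by (intro continuous_intros linear_continuous_on)
qed

lemma outer_mv: "outer u v *v w = cinner_vec w v *s u"
  by (simp add: outer_def matrix_vector_mult_def vec_eq_iff vector_scalar_mult_def cinner_vec_def
      sum_distrib_left algebra_simps)

lemma smat_mv: "smat c M *v w = c *s (M *v w)"
  by (simp add: smat_def matrix_vector_mult_def vec_eq_iff vector_scalar_mult_def sum_distrib_left algebra_simps)

lemma sum_mv: "sum M S *v w = (\<Sum>i\<in>S. M i *v w)"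
  by (induct S rule: infinite_finite_induct) (auto simp: matrix_vector_mult_add_rdistrib)


lemma quad_zero:
  fixes q K :: real
  assumes K: "K \<ge> 0" and h: "\<And>t. 2 * t * q \<le> t^2 * K"
  shows "q = 0"
proof (rule ccontr)
  assume q0: "q \<noteq> 0"
  define t where "t = q / (K + 1)"
  have ta: "t * (K + 1) = q" using K by (simp add: t_def)
  have "0 \<le> (- 2 * t * q + t^2 * K)" using h[of t] by simp
  then have "0 \<le> (- 2 * t * q + t^2 * K) * (K + 1)^2" by simp
  also have "(- 2 * t * q + t^2 * K) * (K + 1)^2 = - 2 * q * (t * (K + 1)) * (K + 1) + (t * (K + 1))^2 * K"
    by (simp add: power2_eq_square algebra_simps)
  also have "\<dots> = - (q^2 * (K + 2))" by (simp only: ta) (simp add: power2_eq_square algebra_simps)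
  finally have "q^2 * (K + 2) \<le> 0" by simp
  moreover have "q^2 * (K + 2) > 0" using q0 K by simp
  ultimately show False by simp
qed

lemma var_orth_real:
  fixes Y :: "complex^'n::finite^'m::finite"
  assumes bound: "\<And>x. norm (Y *v x) \<le> s * norm x" and nv: "norm v = 1" and sv: "norm (Y *v v) = s"
    and o: "inner v w = 0" and s0: "s \<ge> 0"
  shows "inner (Y *v v) (Y *v w) = 0"
proof (rule quad_zero[where K = "s^2 * (norm w)^2"])
  show "s^2 * (norm w)^2 \<ge> 0" by simp
  fix t :: real
  have "norm (Y *v (v + t *\<^sub>R w)) \<le> s * norm (v + t *\<^sub>R w)" by (rule bound)
  then have "(norm (Y *v (v + t *\<^sub>R w)))^2 \<le> (s * norm (v + t *\<^sub>R w))^2"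
    by (simp add: power_mono)
  moreover have "Y *v (v + t *\<^sub>R w) = Y *v v + t *\<^sub>R (Y *v w)"
    using mv_linear[of Y] by (simp add: linear_add linear_scale)
  ultimately have "(norm (Y *v v + t *\<^sub>R (Y *v w)))^2 \<le> s^2 * (norm (v + t *\<^sub>R w))^2"
    by (simp add: power_mult_distrib)
  then have "s^2 + 2 * t * inner (Y *v v) (Y *v w) + t^2 * (norm (Y *v w))^2 \<le> s^2 * (1 + t^2 * (norm w)^2)"
    using o nv sv by (simp add: inner_sq_expand power_mult_distrib algebra_simps)
  moreover have "t^2 * (norm (Y *v w))^2 \<ge> 0" by simp
  moreover have "s^2 * (1 + t^2 * (norm w)^2) = s^2 + t^2 * (s^2 * (norm w)^2)" by (simp add: algebra_simps)
  ultimately show "2 * t * inner (Y *v v) (Y *v w) \<le> t^2 * (s^2 * (norm w)^2)"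
    by linarith
qed

lemma inner_vec_Im: "inner x (\<i> *s y) = Im (cinner_vec (x::complex^'n::finite) y)"
  by (simp add: inner_vec_Re cv_scale_right)

lemma var_lemma:
  fixes Y :: "complex^'n::finite^'m::finite"
  assumes "Y *v w0 \<noteq> 0"
  shows "\<exists>v u s. norm v = 1 \<and> norm u = 1 \<and> s > 0 \<and> Y *v v = complex_of_real s *s u \<and>
     (\<forall>x. norm (Y *v x) \<le> s * norm x) \<and> (\<forall>w. cinner_vec (Y *v w) u = complex_of_real s * cinner_vec w v)"
proof -
  have "sphere (0::complex^'n) 1 \<noteq> {}" by (simp add: sphere_eq_empty)
  then obtain v where v: "v \<in> sphere 0 1" and vmax: "\<And>y. y \<in> sphere 0 1 \<Longrightarrow> norm (Y *v y) \<le> norm (Y *v v)"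
    using continuous_attains_sup[OF compact_sphere _ mv_cont] by blast
  define s where "s = norm (Y *v v)"
  have nv: "norm v = 1" using v by simp
  have bound: "norm (Y *v x) \<le> s * norm x" for x
  proof (cases "x = 0")
    case True then show ?thesis by simp
  next
    case False
    define y where "y = (1 / norm x) *\<^sub>R x"
    have "y \<in> sphere 0 1" using False by (simp add: y_def)
    then have "norm (Y *v y) \<le> s" using vmax by (simp add: s_def)
    moreover have "Y *v y = (1 / norm x) *\<^sub>R (Y *v x)"
      using mv_linear[of Y] by (simp add: y_def linear_scale)
    ultimately show ?thesis using False by (simp add: field_simps)
  qed
  have s0: "s > 0"
  proof -
    have "0 < norm (Y *v w0)" using assms by simp
    also have "\<dots> \<le> s * norm w0" by (rule bound)
    finally show ?thesis by (simp add: zero_less_mult_iff)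
  qed
  define u where "u = complex_of_real (1 / s) *s (Y *v v)"
  have Yv: "Y *v v = complex_of_real s *s u" using s0 by (simp add: u_def vector_smult_assoc)
  have nu: "norm u = 1" using s0 by (simp add: u_def norm_scale_vec s_def norm_divide)
  have orth: "cinner_vec (Y *v w) u = 0" if w: "cinner_vec w v = 0" for w
  proof -
    have "cinner_vec v w = 0" using w cv_commute[of v w] by simp
    then have o1: "inner v w = 0" and o2: "inner v (\<i> *s w) = 0"
      by (simp_all add: inner_vec_Re cv_scale_right)
    have a: "inner (Y *v v) (Y *v w) = 0" by (rule var_orth_real[OF bound nv _ o1]) (use s0 in \<open>simp_all add: s_def\<close>)
    have b: "inner (Y *v v) (Y *v (\<i> *s w)) = 0" by (rule var_orth_real[OF bound nv _ o2]) (use s0 in \<open>simp_all add: s_def\<close>)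
    have "cinner_vec (Y *v v) (Y *v w) = 0"
      using a b by (simp add: mv_scale inner_vec_Re cv_scale_right complex_eq_iff)
    then have "cinner_vec (Y *v w) (Y *v v) = 0" using cv_commute[of "Y *v w"] by simp
    then show ?thesis by (simp add: u_def cv_scale_right)
  qed
  have key: "cinner_vec (Y *v w) u = complex_of_real s * cinner_vec w v" for w
  proof -
    define c where "c = cinner_vec w v"
    have w': "cinner_vec (w - c *s v) v = 0"
      using nv by (simp add: cv_diff_left cv_scale_left cv_self c_def)
    have "Y *v w = Y *v (w - c *s v) + c *s (Y *v v)"
      by (simp add: matrix_vector_mult_diff_distrib mv_scale)
    then have "cinner_vec (Y *v w) u = cinner_vec (Y *v (w - c *s v)) u + c * cinner_vec (Y *v v) u"
      by (simp add: cv_add_left cv_scale_left)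
    also have "\<dots> = c * cinner_vec (Y *v v) u" using orth[OF w'] by simp
    also have "cinner_vec (Y *v v) u = complex_of_real s"
      using nu by (simp add: Yv cv_scale_left cv_self)
    finally show ?thesis by (simp add: c_def mult.commute)
  qed
  show ?thesis using nv nu s0 Yv bound key by blast
qed


definition Yres :: "('m::finite,'n::finite) cmat \<Rightarrow> nat \<Rightarrow> (nat \<Rightarrow> real) \<Rightarrow> (nat \<Rightarrow> complex^'m) \<Rightarrow> (nat \<Rightarrow> complex^'n) \<Rightarrow> ('m,'n) cmat" where
  "Yres X j \<sigma> u v = X - (\<Sum>i<j. smat (complex_of_real (\<sigma> i)) (outer (u i) (v i)))"

definition sinv :: "('m::finite,'n::finite) cmat \<Rightarrow> nat \<Rightarrow> (nat \<Rightarrow> real) \<Rightarrow> (nat \<Rightarrow> complex^'m) \<Rightarrow> (nat \<Rightarrow> complex^'n) \<Rightarrow> bool" where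
  "sinv X j \<sigma> u v \<longleftrightarrow> (\<forall>i<j. \<sigma> i > 0) \<and> (\<forall>i. Suc i < j \<longrightarrow> \<sigma> (Suc i) \<le> \<sigma> i) \<and>
     (\<forall>i<j. \<forall>k<j. cinner_vec (u i) (u k) = (if i = k then 1 else 0)) \<and>
     (\<forall>i<j. \<forall>k<j. cinner_vec (v i) (v k) = (if i = k then 1 else 0)) \<and>
     (\<forall>i<j. Yres X j \<sigma> u v *v v i = 0) \<and>
     (\<forall>i<j. \<forall>w. cinner_vec (Yres X j \<sigma> u v *v w) (u i) = 0) \<and>
     (j > 0 \<longrightarrow> (\<forall>w. norm (Yres X j \<sigma> u v *v w) \<le> \<sigma> (j - 1) * norm w))"

lemma nonzero_mv:
  fixes Y :: "complex^'n::finite^'m::finite"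
  assumes "Y \<noteq> 0" shows "\<exists>w. Y *v w \<noteq> 0"
proof -
  obtain i j where ij: "Y $ i $ j \<noteq> 0" using assms by (auto simp: vec_eq_iff)
  define w where "w = (\<chi> k. if k = j then (1::complex) else 0)"
  have "(Y *v w) $ i = Y $ i $ j"
    by (simp add: matrix_vector_mult_def w_def if_distrib cong: if_cong)
  then show ?thesis using ij by (intro exI[of _ w]) auto
qed

lemma sinv_0: "sinv X 0 \<sigma> u v"
  by (simp add: sinv_def)

lemma cv_norm1: "norm x = 1 \<Longrightarrow> cinner_vec x x = 1"
  by (simp add: cv_self)

lemma sinv_step:
  assumes inv: "sinv X j \<sigma> u v" and nz: "Yres X j \<sigma> u v \<noteq> 0"
  shows "\<exists>\<sigma>' u' v'. sinv X (Suc j) \<sigma>' u' v' \<and> (\<forall>i<j. \<sigma>' i = \<sigma> i \<and> u' i = u i \<and> v' i = v i)"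
proof -
  define Y where "Y = Yres X j \<sigma> u v"
  obtain w0 where "Y *v w0 \<noteq> 0" using nonzero_mv nz by (auto simp: Y_def)
  then obtain v0 u0 s where nv0: "norm v0 = 1" and nu0: "norm u0 = 1" and s0: "s > 0"
    and Yv0: "Y *v v0 = complex_of_real s *s u0" and bnd: "\<And>x. norm (Y *v x) \<le> s * norm x"
    and key: "\<And>w. cinner_vec (Y *v w) u0 = complex_of_real s * cinner_vec w v0"
    using var_lemma by blast
  define \<sigma>' where "\<sigma>' = \<sigma>(j := s)"
  define u' where "u' = u(j := u0)"
  define v' where "v' = v(j := v0)"
  have Y': "Yres X (Suc j) \<sigma>' u' v' = Y - smat (complex_of_real s) (outer u0 v0)"
  proof -
    have "(\<Sum>i<j. smat (complex_of_real (\<sigma>' i)) (outer (u' i) (v' i))) = (\<Sum>i<j. smat (complex_of_real (\<sigma> i)) (outer (u i) (v i)))"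
      by (rule sum.cong) (auto simp: \<sigma>'_def u'_def v'_def)
    then show ?thesis by (simp add: Yres_def Y_def \<sigma>'_def u'_def v'_def algebra_simps)
  qed
  have Y'w: "Yres X (Suc j) \<sigma>' u' v' *v w = Y *v w - (complex_of_real s * cinner_vec w v0) *s u0" for w
    unfolding Y' by (simp add: matrix_vector_mult_diff_rdistrib smat_mv outer_mv vector_smult_assoc)
  have I: "\<forall>i<j. \<sigma> i > 0" "\<forall>i. Suc i < j \<longrightarrow> \<sigma> (Suc i) \<le> \<sigma> i"
      "\<forall>i<j. \<forall>k<j. cinner_vec (u i) (u k) = (if i = k then 1 else 0)"
      "\<forall>i<j. \<forall>k<j. cinner_vec (v i) (v k) = (if i = k then 1 else 0)"
      "\<forall>i<j. Y *v v i = 0" "\<forall>i<j. \<forall>w. cinner_vec (Y *v w) (u i) = 0"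
      "j > 0 \<longrightarrow> (\<forall>w. norm (Y *v w) \<le> \<sigma> (j - 1) * norm w)"
    using inv unfolding sinv_def Y_def by blast+
  have uo: "cinner_vec u0 (u i) = 0" if "i < j" for i
  proof -
    have "cinner_vec (Y *v v0) (u i) = 0" using I(6) that by blast
    then have "complex_of_real s * cinner_vec u0 (u i) = 0" by (simp add: Yv0 cv_scale_left)
    then show ?thesis using s0 by simp
  qed
  have vo: "cinner_vec (v i) v0 = 0" if "i < j" for i
  proof -
    have "complex_of_real s * cinner_vec (v i) v0 = 0" using key[of "v i"] I(5) that by simp
    then show ?thesis using s0 by simp
  qed
  have s_le: "s \<le> \<sigma> (j - 1)" if "j > 0"
  proof -
    have "norm (Y *v v0) = s" using nu0 s0 by (simp add: Yv0 norm_scale_vec)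
    then show ?thesis using I(7) that nv0 by (metis mult.right_neutral)
  qed
  have "sinv X (Suc j) \<sigma>' u' v'"
    unfolding sinv_def
  proof (intro conjI allI impI)
    fix i assume "i < Suc j" then show "\<sigma>' i > 0" using I(1) s0 by (auto simp: \<sigma>'_def less_Suc_eq)
  next
    fix i assume si: "Suc i < Suc j"
    show "\<sigma>' (Suc i) \<le> \<sigma>' i"
    proof (cases "Suc i = j")
      case True
      then have "s \<le> \<sigma> i" using s_le by fastforce
      then show ?thesis using True by (simp add: \<sigma>'_def)
    next
      case False then have "Suc i < j" using si by simp
      then show ?thesis using I(2) by (simp add: \<sigma>'_def)
    qed
  next
    fix i k assume "i < Suc j" "k < Suc j"
    then show "cinner_vec (u' i) (u' k) = (if i = k then 1 else 0)"
      using I(3) uo[of i] uo[of k] cv_commute[of "u i" u0] cv_norm1[OF nu0]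
      by (auto simp: u'_def less_Suc_eq)
  next
    fix i k assume "i < Suc j" "k < Suc j"
    then show "cinner_vec (v' i) (v' k) = (if i = k then 1 else 0)"
      using I(4) vo[of i] vo[of k] cv_commute[of v0 "v k"] cv_norm1[OF nv0]
      by (auto simp: v'_def less_Suc_eq)
  next
    fix i assume i: "i < Suc j"
    show "Yres X (Suc j) \<sigma>' u' v' *v v' i = 0"
    proof (cases "i = j")
      case True
      then have "v' i = v0" by (simp add: v'_def)
      then show ?thesis using cv_norm1[OF nv0] by (simp add: Y'w Yv0)
    next
      case False then have "i < j" using i by simp
      moreover have "v' i = v i" using False by (simp add: v'_def)
      ultimately show ?thesis using I(5) vo cv_commute[of "v i" v0] by (simp add: Y'w)
    qed
  next
    fix i w assume i: "i < Suc j"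
    show "cinner_vec (Yres X (Suc j) \<sigma>' u' v' *v w) (u' i) = 0"
    proof (cases "i = j")
      case True
      then have "u' i = u0" by (simp add: u'_def)
      then show ?thesis using cv_norm1[OF nu0] key[of w]
        by (simp add: Y'w cv_diff_left cv_scale_left)
    next
      case False then have "i < j" using i by simp
      moreover have "u' i = u i" using False by (simp add: u'_def)
      ultimately show ?thesis using I(6) uo by (simp add: Y'w cv_diff_left cv_scale_left)
    qed
  next
    fix w assume "0 < Suc j"
    define c where "c = cinner_vec w v0"
    have e: "Yres X (Suc j) \<sigma>' u' v' *v w = Y *v (w - c *s v0)"
      by (simp add: Y'w c_def matrix_vector_mult_diff_distrib mv_scale Yv0 vector_smult_assoc)
    have "norm (w - c *s v0) \<le> norm w"
    proof -
      have o: "inner (w - c *s v0) (c *s v0) = 0"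
        using cv_norm1[OF nv0] by (simp add: inner_vec_Re cv_diff_left cv_scale_left cv_scale_right c_def)
      have "(norm w)^2 = (norm ((w - c *s v0) + c *s v0))^2" by simp
      also have "\<dots> = (norm (w - c *s v0))^2 + (norm (c *s v0))^2"
        by (subst inner_sq_expand(1)) (simp add: o)
      finally have "(norm (w - c *s v0))^2 \<le> (norm w)^2" by simp
      then show ?thesis by (simp add: power2_le_iff_abs_le)
    qed
    then have "s * norm (w - c *s v0) \<le> s * norm w" using s0 by simp
    then show "norm (Yres X (Suc j) \<sigma>' u' v' *v w) \<le> \<sigma>' (Suc j - 1) * norm w"
      using e bnd[of "w - c *s v0"] by (simp add: \<sigma>'_def)
  qed
  moreover have "\<forall>i<j. \<sigma>' i = \<sigma> i \<and> u' i = u i \<and> v' i = v i" by (simp add: \<sigma>'_def u'_def v'_def)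
  ultimately show ?thesis by blast
qed

lemma sinv_bound:
  fixes X :: "('m::finite,'n::finite) cmat"
  assumes inv: "sinv X j \<sigma> u v"
  shows "j \<le> DIM(complex^'n)"
proof -
  have vo: "\<forall>i<j. \<forall>k<j. cinner_vec (v i) (v k) = (if i = k then 1 else 0)" using inv by (simp add: sinv_def)
  have inj: "inj_on v {..<j}"
  proof (rule inj_onI)
    fix i k assume "i \<in> {..<j}" "k \<in> {..<j}" "v i = v k"
    then show "i = k" using vo by (metis (full_types) lessThan_iff one_neq_zero)
  qed
  have po: "pairwise orthogonal (v ` {..<j})"
    unfolding pairwise_def orthogonal_def
  proof (intro ballI impI)
    fix x y assume x: "x \<in> v ` {..<j}" and y: "y \<in> v ` {..<j}" and xy: "x \<noteq> y"
    obtain i where i: "i < j" "x = v i" using x by auto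
    obtain k where k: "k < j" "y = v k" using y by auto
    have "i \<noteq> k" using xy i k by auto
    then have "cinner_vec (v i) (v k) = 0" using vo i k by simp
    then show "inner x y = 0" using i k by (simp add: inner_vec_Re)
  qed
  have "0 \<notin> v ` {..<j}" using vo by force
  then have "independent (v ` {..<j})" using po pairwise_orthogonal_independent by blast
  then have "card (v ` {..<j}) \<le> DIM(complex^'n)" using independent_bound by blast
  then show ?thesis using card_image[OF inj] by simp
qed

lemma svd_exists:
  fixes X :: "('m::finite,'n::finite) cmat"
  shows "\<exists>K \<sigma> u v. svd_decomp X K \<sigma> u v \<and> (\<forall>i. Suc i < K \<longrightarrow> \<sigma> (Suc i) \<le> \<sigma> i)"
proof -
  have "\<forall>j \<sigma> u v. sinv X j \<sigma> u v \<and> j + d = DIM(complex^'n) + 1 \<longrightarrow>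
      (\<exists>K \<sigma> u v. svd_decomp X K \<sigma> u v \<and> (\<forall>i. Suc i < K \<longrightarrow> \<sigma> (Suc i) \<le> \<sigma> i))" for d
  proof (induction d)
    case 0
    show ?case
    proof (intro allI impI)
      fix j \<sigma> u v assume a: "sinv X j \<sigma> u v \<and> j + 0 = DIM(complex^'n) + 1"
      then have "j \<le> DIM(complex^'n)" using sinv_bound[of X j \<sigma> u v] by blast
      then show "\<exists>K \<sigma> u v. svd_decomp X K \<sigma> u v \<and> (\<forall>i. Suc i < K \<longrightarrow> \<sigma> (Suc i) \<le> \<sigma> i)"
        using a by simp
    qed
  next
    case (Suc d)
    show ?case
    proof (intro allI impI)
      fix j \<sigma> u v assume a: "sinv X j \<sigma> u v \<and> j + Suc d = DIM(complex^'n) + 1"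
      show "\<exists>K \<sigma> u v. svd_decomp X K \<sigma> u v \<and> (\<forall>i. Suc i < K \<longrightarrow> \<sigma> (Suc i) \<le> \<sigma> i)"
      proof (cases "Yres X j \<sigma> u v = 0")
        case True
        then have "X = (\<Sum>k<j. smat (complex_of_real (\<sigma> k)) (outer (u k) (v k)))" by (simp add: Yres_def)
        then have "svd_decomp X j \<sigma> u v" using a by (simp add: svd_decomp_def sinv_def)
        then show ?thesis using a by (auto simp: sinv_def)
      next
        case False
        then obtain \<sigma>' u' v' where s': "sinv X (Suc j) \<sigma>' u' v'" using sinv_step a by blast
        have "Suc j + d = DIM(complex^'n) + 1" using a by simp
        then show ?thesis using Suc.IH s' by blast
      qed
    qed
  qed
  from this[of "DIM(complex^'n) + 1", rule_format, of 0 "\<lambda>_. 0" "\<lambda>_. 0" "\<lambda>_. 0"] sinv_0[of X]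
  show ?thesis by simp
qed


lemma svd_mv:
  assumes "svd_decomp X K \<sigma> u v"
  shows "X *v w = (\<Sum>i<K. (complex_of_real (\<sigma> i) * cinner_vec w (v i)) *s u i)"
proof -
  have "X = (\<Sum>k<K. smat (complex_of_real (\<sigma> k)) (outer (u k) (v k)))" using assms by (simp add: svd_decomp_def)
  then show ?thesis by (simp add: sum_mv smat_mv outer_mv vector_smult_assoc)
qed

lemma svd_cinner:
  assumes "svd_decomp X K \<sigma> u v"
  shows "cinner_vec (X *v w) z = (\<Sum>i<K. complex_of_real (\<sigma> i) * cinner_vec w (v i) * cinner_vec (u i) z)"
  by (simp add: svd_mv[OF assms] cv_sum_left cv_scale_left)

lemma svd_sigma:
  assumes d: "svd_decomp X K \<sigma> u v" and k: "k < K"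
  shows "cinner_vec (X *v v k) (u k) = complex_of_real (\<sigma> k)"
proof -
  have "cinner_vec (X *v v k) (u k) = (\<Sum>i<K. if i = k then complex_of_real (\<sigma> i) else 0)"
    unfolding svd_cinner[OF d] using d k by (intro sum.cong) (auto simp: svd_decomp_def)
  also have "\<dots> = complex_of_real (\<sigma> k)" using k by simp
  finally show ?thesis .
qed

lemma cv_one_norm: "cinner_vec x x = 1 \<Longrightarrow> norm x = 1"
proof -
  assume "cinner_vec x x = 1"
  then have "(norm x)^2 = 1" using cv_self[of x] by (metis of_real_eq_1_iff)
  then show "norm x = 1" using norm_ge_zero[of x] by (auto simp: power2_eq_1_iff)
qed

lemma sum_if_eq: "k < (K::nat) \<Longrightarrow> (\<Sum>l<K. if l = k then f l else 0) = (f k :: 'a::comm_monoid_add)"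
  by simp

lemma bessel:
  fixes K :: nat
  assumes on: "\<forall>i<K. \<forall>j<K. cinner_vec (v i) (v j) = (if i = j then 1 else 0)"
  shows "(\<Sum>k<K. (cmod (cinner_vec y (v k)))^2) \<le> (norm y)^2"
proof -
  define c where "c k = cinner_vec y (v k)" for k
  define p where "p = (\<Sum>k<K. c k *s v k)"
  define S where "S = (\<Sum>k<K. c k * cnj (c k))"
  have yp: "cinner_vec y p = S"
    by (simp add: p_def S_def cv_sum_right cv_scale_right c_def[symmetric] mult.commute)
  have "cinner_vec (v k) p = cnj (c k)" if "k < K" for k
  proof -
    have "cinner_vec (v k) p = (\<Sum>l<K. if l = k then cnj (c l) else 0)"
      unfolding p_def cv_sum_right cv_scale_right using on that by (intro sum.cong) auto
    also have "\<dots> = cnj (c k)" by (rule sum_if_eq[OF that])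
    finally show ?thesis .
  qed
  then have pp: "cinner_vec p p = S"
    unfolding S_def by (subst (1) p_def) (simp add: cv_sum_left cv_scale_left)
  have py: "cinner_vec p y = S" using yp cv_commute[of p y] by (simp add: S_def cnj_sum mult.commute)
  have ReS: "Re S = (\<Sum>k<K. (cmod (c k))^2)"
  proof -
    have "Re (c k * cnj (c k)) = (cmod (c k))^2" for k
      using complex_norm_square[of "c k"] by (metis Re_complex_of_real)
    then show ?thesis by (simp add: S_def Re_sum)
  qed
  have "0 \<le> (norm (y - p))^2" by simp
  also have "(norm (y - p))^2 = Re (cinner_vec (y - p) (y - p))" by (simp add: cv_self)
  also have "\<dots> = Re (cinner_vec y y - S)"
    by (simp add: cv_diff_left cv_diff_right yp pp py)
  also have "\<dots> = (norm y)^2 - (\<Sum>k<K. (cmod (c k))^2)" by (simp add: cv_self ReS)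
  finally show ?thesis by (simp add: c_def)
qed

lemma nuc_le:
  assumes d1: "svd_decomp X K \<sigma> u v" and d2: "svd_decomp X L \<tau> x y"
  shows "(\<Sum>k<K. \<sigma> k) \<le> (\<Sum>l<L. \<tau> l)"
proof -
  define a where "a k l = cmod (cinner_vec (y l) (v k))" for k l
  define b where "b k l = cmod (cinner_vec (x l) (u k))" for k l
  have t0: "\<tau> l \<ge> 0" if "l < L" for l using d2 that by (auto simp: svd_decomp_def less_imp_le)
  have "\<sigma> k \<le> (\<Sum>l<L. \<tau> l * (a k l * b k l))" if k: "k < K" for k
  proof -
    have "complex_of_real (\<sigma> k) = (\<Sum>l<L. complex_of_real (\<tau> l) * cinner_vec (v k) (y l) * cinner_vec (x l) (u k))"
      using svd_sigma[OF d1 k] svd_cinner[OF d2] by simp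
    moreover have "\<sigma> k > 0" using d1 k by (simp add: svd_decomp_def)
    ultimately have "\<sigma> k = cmod (\<Sum>l<L. complex_of_real (\<tau> l) * cinner_vec (v k) (y l) * cinner_vec (x l) (u k))"
      by (metis abs_of_pos norm_of_real)
    also have "\<dots> \<le> (\<Sum>l<L. cmod (complex_of_real (\<tau> l) * cinner_vec (v k) (y l) * cinner_vec (x l) (u k)))"
      by (rule norm_sum)
    also have "\<dots> = (\<Sum>l<L. \<tau> l * (a k l * b k l))"
    proof (rule sum.cong[OF refl])
      fix l assume "l \<in> {..<L}"
      then have "\<tau> l \<ge> 0" using t0 by simp
      moreover have "cmod (cinner_vec (v k) (y l)) = a k l" using cv_commute[of "v k" "y l"] by (simp add: a_def)
      ultimately show "cmod (complex_of_real (\<tau> l) * cinner_vec (v k) (y l) * cinner_vec (x l) (u k)) = \<tau> l * (a k l * b k l)"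
        by (simp add: norm_mult b_def)
    qed
    finally show ?thesis .
  qed
  then have "(\<Sum>k<K. \<sigma> k) \<le> (\<Sum>k<K. \<Sum>l<L. \<tau> l * (a k l * b k l))" by (rule sum_mono) simp
  also have "\<dots> = (\<Sum>l<L. \<tau> l * (\<Sum>k<K. a k l * b k l))"
    by (subst sum.swap) (simp add: sum_distrib_left)
  also have "\<dots> \<le> (\<Sum>l<L. \<tau> l * 1)"
  proof (rule sum_mono)
    fix l assume l: "l \<in> {..<L}"
    have "(\<Sum>k<K. a k l * b k l) \<le> (\<Sum>k<K. ((a k l)^2 + (b k l)^2) / 2)"
    proof (rule sum_mono)
      fix k show "a k l * b k l \<le> ((a k l)^2 + (b k l)^2) / 2"
        using sum_squares_bound[of "a k l" "b k l"] by (simp add: field_simps)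
    qed
    also have "\<dots> = ((\<Sum>k<K. (a k l)^2) + (\<Sum>k<K. (b k l)^2)) / 2"
      by (simp add: sum_divide_distrib sum.distrib add_divide_distrib)
    also have "\<dots> \<le> (1 + 1) / 2"
    proof -
      have "(\<Sum>k<K. (a k l)^2) \<le> (norm (y l))^2" unfolding a_def
        by (rule bessel) (use d1 in \<open>simp add: svd_decomp_def\<close>)
      moreover have "(\<Sum>k<K. (b k l)^2) \<le> (norm (x l))^2" unfolding b_def
        by (rule bessel) (use d1 in \<open>simp add: svd_decomp_def\<close>)
      moreover have "norm (y l) = 1" "norm (x l) = 1"
        using d2 l by (auto simp: svd_decomp_def intro!: cv_one_norm)
      ultimately show ?thesis by simp
    qed
    finally show "\<tau> l * (\<Sum>k<K. a k l * b k l) \<le> \<tau> l * 1"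
      using t0 l by (intro mult_left_mono) auto
  qed
  finally show ?thesis by simp
qed

lemma nuclear_eq:
  assumes d: "svd_decomp X K \<sigma> u v"
  shows "nuclear_norm X = (\<Sum>k<K. \<sigma> k)"
  unfolding nuclear_norm_def
proof (rule the_equality)
  show "\<exists>K' \<sigma>' u' v'. svd_decomp X K' \<sigma>' u' v' \<and> (\<Sum>k<K. \<sigma> k) = (\<Sum>k<K'. \<sigma>' k)" using d by blast
next
  fix s assume "\<exists>K' \<sigma>' u' v'. svd_decomp X K' \<sigma>' u' v' \<and> s = (\<Sum>k<K'. \<sigma>' k)"
  then obtain K' \<sigma>' u' v' where d': "svd_decomp X K' \<sigma>' u' v'" "s = (\<Sum>k<K'. \<sigma>' k)" by blast
  show "s = (\<Sum>k<K. \<sigma> k)" using nuc_le[OF d d'(1)] nuc_le[OF d'(1) d] d'(2) by simp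
qed


lemma inner_outer:
  "inner (smat (complex_of_real a) (outer u v)) (smat (complex_of_real b) (outer u' v')) =
   Re (complex_of_real (a * b) * cinner_vec u u' * cinner_vec v' v)"
proof -
  have "cinner_mat (outer u v) (outer u' v') = cinner_vec u u' * cinner_vec v' v"
    by (simp add: cinner_mat_def outer_def cinner_vec_def sum_product mult_ac)
      (subst sum.swap, simp)
  then show ?thesis by (simp add: inner_mat_Re cinner_mat_smat_left cinner_mat_smat_right mult_ac)
qed

lemma svd_partial_norm:
  assumes d: "svd_decomp Y K \<sigma> u v" and I: "I \<subseteq> {..<K}"
  shows "(norm (\<Sum>k\<in>I. smat (complex_of_real (\<sigma> k)) (outer (u k) (v k))))^2 = (\<Sum>k\<in>I. (\<sigma> k)^2)"
proof -
  have fin: "finite I" using I finite_subset by blast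
  have ip: "inner (smat (complex_of_real (\<sigma> k)) (outer (u k) (v k))) (smat (complex_of_real (\<sigma> l)) (outer (u l) (v l)))
       = (if k = l then (\<sigma> k)^2 else 0)" if "k \<in> I" "l \<in> I" for k l
    using that I d by (auto simp: inner_outer svd_decomp_def power2_eq_square subset_iff)
  have "(norm (\<Sum>k\<in>I. smat (complex_of_real (\<sigma> k)) (outer (u k) (v k))))^2 =
      (\<Sum>k\<in>I. \<Sum>l\<in>I. inner (smat (complex_of_real (\<sigma> k)) (outer (u k) (v k))) (smat (complex_of_real (\<sigma> l)) (outer (u l) (v l))))"
    by (simp add: power2_norm_eq_inner inner_sum_left inner_sum_right) (rule sum.swap)
  also have "\<dots> = (\<Sum>k\<in>I. \<Sum>l\<in>I. if k = l then (\<sigma> k)^2 else 0)"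
    by (intro sum.cong refl) (simp add: ip)
  also have "\<dots> = (\<Sum>k\<in>I. (\<sigma> k)^2)" using fin by simp
  finally show ?thesis .
qed

lemma sorted_mono:
  assumes "\<forall>i. Suc i < K \<longrightarrow> \<sigma> (Suc i) \<le> (\<sigma> i :: real)"
  shows "l \<le> k \<Longrightarrow> k < K \<Longrightarrow> \<sigma> k \<le> \<sigma> l"
proof (induction k)
  case 0 then show ?case by simp
next
  case (Suc k)
  show ?case
  proof (cases "l = Suc k")
    case True then show ?thesis by simp
  next
    case False
    then have "l \<le> k" using Suc.prems by simp
    then have "\<sigma> k \<le> \<sigma> l" using Suc by simp
    moreover have "\<sigma> (Suc k) \<le> \<sigma> k" using assms Suc.prems by blast
    ultimately show ?thesis by simp
  qed
qed

lemma nuclear_bound: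
  fixes A :: "('m::finite,'n::finite) cmat \<Rightarrow> complex^'p::finite" and Y :: "('m,'n) cmat"
  assumes la: "linear A" and r: "r > 0" and g: "\<gamma> \<ge> 0"
    and hyp: "\<And>Z. rank Z \<le> r \<Longrightarrow> norm (A Z) \<le> \<gamma> * norm Z"
  shows "norm (A Y) \<le> \<gamma> * (norm Y + nuclear_norm Y / sqrt (real r))"
proof -
  obtain K \<sigma> u v where d: "svd_decomp Y K \<sigma> u v" and srt: "\<forall>i. Suc i < K \<longrightarrow> \<sigma> (Suc i) \<le> \<sigma> i"
    using svd_exists by blast
  have nn: "nuclear_norm Y = (\<Sum>k<K. \<sigma> k)" by (rule nuclear_eq[OF d])
  have spos: "\<sigma> k > 0" if "k < K" for k using d that by (simp add: svd_decomp_def)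
  define Tm where "Tm k = smat (complex_of_real (\<sigma> k)) (outer (u k) (v k))" for k
  define B where "B j = {k\<in>{..<K}. k div r = j}" for j
  define Yb where "Yb j = (\<Sum>k\<in>B j. Tm k)" for j
  define J where "J = Suc (K div r)"
  define S where "S j = (\<Sum>k\<in>B j. \<sigma> k)" for j
  have YT: "Y = (\<Sum>k<K. Tm k)" using d by (simp add: svd_decomp_def Tm_def)
  have img: "(\<lambda>k. k div r) ` {..<K} \<subseteq> {..<J}" by (auto simp: J_def div_le_mono le_imp_less_Suc)
  have YYb: "Y = (\<Sum>j<J. Yb j)"
    unfolding YT Yb_def B_def using sum.group[OF finite_lessThan finite_lessThan img, of Tm] by simp
  have sumS: "(\<Sum>j<J. S j) = (\<Sum>k<K. \<sigma> k)"
    unfolding S_def B_def using sum.group[OF finite_lessThan finite_lessThan img, of \<sigma>] by simp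
  have Bsub: "B j \<subseteq> {..<K}" for j by (auto simp: B_def)
  have Bfin: "finite (B j)" for j using Bsub finite_subset by blast
  have nYb: "(norm (Yb j))^2 = (\<Sum>k\<in>B j. (\<sigma> k)^2)" for j
    unfolding Yb_def Tm_def by (rule svd_partial_norm[OF d Bsub])
  have nY: "(norm Y)^2 = (\<Sum>k<K. (\<sigma> k)^2)"
    unfolding YT Tm_def by (rule svd_partial_norm[OF d]) simp
  have Bint: "B j \<subseteq> {j*r..<j*r + r}" for j
  proof
    fix k assume "k \<in> B j"
    then have "k div r = j" by (simp add: B_def)
    then show "k \<in> {j*r..<j*r + r}"
      using div_times_less_eq_dividend[of k r] dividend_less_div_times[OF r, of k] by (auto simp: mult.commute)
  qed
  have cardB: "card (B j) \<le> r" for j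
    using card_mono[OF _ Bint[of j]] by simp
  have rkYb: "rank (Yb j) \<le> r" for j
  proof -
    define vc where "vc k = (\<chi> i. cnj (v k $ i))" for k
    have "rank (Yb j) \<le> card (vc ` B j)"
    proof (rule rank_le_card)
      show "finite (vc ` B j)" using Bfin by simp
      fix i
      have "(Yb j) $ i = (\<Sum>k\<in>B j. (complex_of_real (\<sigma> k) * u k $ i) *s vc k)"
        by (simp add: Yb_def Tm_def sum_component smat_row vec_eq_iff outer_def vc_def vector_scalar_mult_def mult_ac)
      also have "\<dots> \<in> vec.span (vc ` B j)"
        by (intro vec.span_sum vec.span_scale vec.span_base) auto
      finally show "(Yb j) $ i \<in> vec.span (vc ` B j)" .
    qed
    also have "\<dots> \<le> card (B j)" using Bfin card_image_le by blast
    finally show ?thesis using cardB[of j] by simp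
  qed
  have S0: "S j \<ge> 0" for j unfolding S_def using spos Bsub by (intro sum_nonneg) (meson less_imp_le lessThan_iff subsetD)
  have blk: "norm (Yb (Suc j)) \<le> S j / sqrt (real r)" for j
  proof (cases "B (Suc j) = {}")
    case True then show ?thesis using S0[of j] by (simp add: Yb_def)
  next
    case False
    then obtain k0 where k0: "k0 \<in> B (Suc j)" by blast
    have k0K: "k0 < K" and k0d: "k0 div r = Suc j" using k0 by (auto simp: B_def)
    have k0ge: "Suc j * r \<le> k0" using div_times_less_eq_dividend[of k0 r] k0d by simp
    have Bfull: "B j = {j*r..<j*r + r}"
    proof
      show "B j \<subseteq> {j*r..<j*r + r}" by (rule Bint)
      show "{j*r..<j*r + r} \<subseteq> B j"
      proof
        fix l assume l: "l \<in> {j*r..<j*r + r}"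
        then have "l div r = j" by (intro div_nat_eqI) (auto simp: mult.commute)
        moreover have "l < K" using l k0ge k0K by (simp add: algebra_simps)
        ultimately show "l \<in> B j" by (simp add: B_def)
      qed
    qed
    have cBj: "card (B j) = r" by (simp add: Bfull)
    have le: "\<sigma> k \<le> \<sigma> l" if "k \<in> B (Suc j)" "l \<in> B j" for k l
    proof -
      have "l < j*r + r" using that Bfull by auto
      moreover have "Suc j * r \<le> k" using that div_times_less_eq_dividend[of k r] by (simp add: B_def)
      ultimately have "l \<le> k" by (simp add: algebra_simps)
      moreover have "k < K" using that by (simp add: B_def)
      ultimately show ?thesis by (rule sorted_mono[OF srt])
    qed
    have kb: "\<sigma> k \<le> S j / real r" if "k \<in> B (Suc j)" for k
    proof -
      have "of_nat (card (B j)) * \<sigma> k \<le> S j" unfolding S_def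
        by (rule sum_bounded_below) (rule le[OF that])
      then show ?thesis using r cBj by (simp add: field_simps)
    qed
    have "(norm (Yb (Suc j)))^2 = (\<Sum>k\<in>B (Suc j). (\<sigma> k)^2)" by (rule nYb)
    also have "\<dots> \<le> of_nat (card (B (Suc j))) * (S j / real r)^2"
    proof (rule sum_bounded_above)
      fix k assume k: "k \<in> B (Suc j)"
      then have "\<sigma> k > 0" using spos by (simp add: B_def)
      then show "(\<sigma> k)^2 \<le> (S j / real r)^2" using kb[OF k] by (intro power_mono) auto
    qed
    also have "\<dots> \<le> real r * (S j / real r)^2" using cardB[of "Suc j"] by (intro mult_right_mono) auto
    also have "\<dots> = (S j / sqrt (real r))^2" using r by (simp add: power_divide power2_eq_square)
    finally show ?thesis using S0[of j] r by (simp add: power2_le_iff_abs_le)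
  qed
  have b0: "norm (Yb 0) \<le> norm Y"
  proof -
    have "(norm (Yb 0))^2 \<le> (norm Y)^2" unfolding nYb nY
      by (rule sum_mono2) (auto simp: Bsub)
    then show ?thesis by (simp add: power2_le_iff_abs_le)
  qed
  have "norm (A Y) = norm (\<Sum>j<J. A (Yb j))" unfolding YYb using la by (simp add: linear_sum)
  also have "\<dots> \<le> (\<Sum>j<J. norm (A (Yb j)))" by (rule norm_sum)
  also have "\<dots> \<le> (\<Sum>j<J. \<gamma> * norm (Yb j))" by (intro sum_mono hyp rkYb)
  also have "\<dots> = \<gamma> * (\<Sum>j<J. norm (Yb j))" by (simp add: sum_distrib_left)
  also have "(\<Sum>j<J. norm (Yb j)) = norm (Yb 0) + (\<Sum>j<K div r. norm (Yb (Suc j)))"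
    unfolding J_def by (rule sum.lessThan_Suc_shift)
  also have "\<dots> \<le> norm Y + (\<Sum>j<K div r. S j / sqrt (real r))"
    using b0 by (intro add_mono sum_mono blk) auto
  also have "(\<Sum>j<K div r. S j / sqrt (real r)) \<le> (\<Sum>j<J. S j) / sqrt (real r)"
  proof -
    have "(\<Sum>j<K div r. S j) \<le> (\<Sum>j<J. S j)" unfolding J_def by (rule sum_mono2) (auto simp: S0)
    then show ?thesis by (simp add: sum_divide_distrib[symmetric] divide_right_mono)
  qed
  finally show ?thesis using g by (simp add: sumS nn mult_left_mono)
qed


theorem theorem1:
  fixes Ats :: "(complex^'n^'m) set"
    and A :: "complex^'n^'m \<Rightarrow> complex^'p"
    and X0 X0r :: "complex^'n^'m"
    and \<nu> b :: "complex^'p"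
    and r :: nat
    and Xh :: "nat \<Rightarrow> complex^'n^'m"
  assumes r_pos: "r > 0"
    and lin: "clinear_op A"
    and rip: "rip_const A (4 * r) \<le> 0.04"
    and b_def: "b = A X0 + \<nu>"
    and atoms: "atom_set Ats"
    and run: "admira_run Ats A b r Xh"
    and X0r_rank: "rank X0r \<le> r"
    and X0r_best: "\<forall>Y :: complex^'n^'m. rank Y \<le> r \<longrightarrow> norm (X0 - X0r) \<le> norm (X0 - Y)"
  shows "(\<forall>k. norm (X0 - Xh (Suc k)) \<le> 0.5 * norm (X0 - Xh k)
              + 8 * (norm (X0 - X0r) + nuclear_norm (X0 - X0r) / sqrt (real r) + norm \<nu>))
       \<and> (\<forall>k. norm (X0 - Xh k) \<le> (1/2)^k * norm X0
              + 16 * (norm (X0 - X0r) + nuclear_norm (X0 - X0r) / sqrt (real r) + norm \<nu>))"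
proof -
  have la: "linear A" using lin by (rule clinear_linear)
  define X where "X = X0r"
  obtain \<Psi>s where Ps: "\<Psi>s \<subseteq> Ats" "finite \<Psi>s" "card \<Psi>s \<le> r" "X \<in> mspan \<Psi>s"
    using rank_decomp[OF atoms X0r_rank] by (auto simp: X_def)
  define e where "e = A (X0 - X) + \<nu>"
  have b: "b = A X + e" using la by (simp add: b_def e_def linear_diff)
  obtain \<Psi>h \<Psi>' \<Psi>t Xt where R0: "Xh 0 = 0" "\<Psi>h 0 = {}"
    and R: "\<And>k. best_atoms Ats (2 * r) (adjoint_op A (b - A (Xh k))) (\<Psi>' (Suc k)) \<and>
          \<Psi>t (Suc k) = \<Psi>' (Suc k) \<union> \<Psi>h k \<and>
          Xt (Suc k) \<in> mspan (\<Psi>t (Suc k)) \<and>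
          (\<forall>X\<in>mspan (\<Psi>t (Suc k)). norm (b - A (Xt (Suc k))) \<le> norm (b - A X)) \<and>
          best_atoms Ats r (Xt (Suc k)) (\<Psi>h (Suc k)) \<and>
          Xh (Suc k) = proj (\<Psi>h (Suc k)) (Xt (Suc k))"
    using run unfolding admira_run_def by blast
  have Hk: "finite (\<Psi>h k) \<and> \<Psi>h k \<subseteq> Ats \<and> card (\<Psi>h k) \<le> r \<and> Xh k \<in> mspan (\<Psi>h k)" for k
  proof (cases k)
    case 0 then show ?thesis using R0 by simp
  next
    case (Suc k')
    then show ?thesis using R[of k'] proj_in by (auto simp: best_atoms_def)
  qed
  have step: "norm (X - Xh (Suc k)) \<le> (1/6) * norm (X - Xh k) + (51/8) * norm e" for k
  proof -
    have "norm (X - proj (\<Psi>h (Suc k)) (Xt (Suc k))) \<le> (1/6) * norm (X - Xh k) + (51/8) * norm e"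
      using step_bound[OF lin atoms rip Ps(2,1,3,4) b, of "\<Psi>h k" "Xh k" "\<Psi>' (Suc k)" "Xt (Suc k)" "\<Psi>h (Suc k)"]
        Hk[of k] R[of k] by auto
    then show ?thesis using R[of k] by simp
  qed
  define n where "n = nuclear_norm (X0 - X0r)"
  have n0: "n \<ge> 0"
  proof -
    obtain K \<sigma> u v where d: "svd_decomp (X0 - X0r) K \<sigma> u v" using svd_exists by blast
    then have "n = (\<Sum>k<K. \<sigma> k)" unfolding n_def by (rule nuclear_eq)
    also have "\<dots> \<ge> 0" using d by (intro sum_nonneg) (auto simp: svd_decomp_def less_imp_le)
    finally show ?thesis .
  qed
  have gam: "norm (A Z) \<le> 1.02 * norm Z" if "rank Z \<le> r" for Z
  proof -
    have "rank Z \<le> 4 * r" using that by simp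
    then have "(norm (A Z))^2 \<le> (1 + rip_const A (4*r)) * (norm Z)^2" by (rule rip_prop(3)[OF lin])
    also have "\<dots> \<le> 1.0404 * (norm Z)^2" using rip by (intro mult_right_mono) auto
    also have "\<dots> = (1.02 * norm Z)^2" by (simp add: power2_eq_square algebra_simps)
    finally show ?thesis by (simp add: power2_le_iff_abs_le)
  qed
  have AX0: "norm (A (X0 - X0r)) \<le> 1.02 * (norm (X0 - X0r) + n / sqrt (real r))"
    unfolding n_def by (rule nuclear_bound[OF la r_pos _ gam]) simp_all
  define E where "E = norm (X0 - X0r) + n / sqrt (real r) + norm \<nu>"
  have q0: "n / sqrt (real r) \<ge> 0" using n0 by simp
  have ne: "norm e \<le> 1.02 * (norm (X0 - X0r) + n / sqrt (real r)) + norm \<nu>"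
    using AX0 norm_triangle_ineq[of "A (X0 - X0r)" \<nu>] unfolding e_def X_def by linarith
  have part1': "norm (X0 - Xh (Suc k)) \<le> (1/2) * norm (X0 - Xh k) + 8 * E" for k
  proof -
    have t1: "norm (X0 - Xh (Suc k)) \<le> norm (X0 - X) + norm (X - Xh (Suc k))"
      using norm_triangle_ineq[of "X0 - X" "X - Xh (Suc k)"] by simp
    have t2: "norm (X - Xh k) \<le> norm (X0 - X) + norm (X0 - Xh k)"
      using norm_triangle_ineq[of "X - X0" "X0 - Xh k"] by (simp add: norm_minus_commute)
    have ne2: "norm e \<le> (51/50) * norm (X0 - X0r) + (51/50) * (n / sqrt (real r)) + norm \<nu>"
      using ne by (simp add: distrib_left)
    have "norm (X0 - X) \<ge> 0" "norm (X0 - Xh k) \<ge> 0" "norm \<nu> \<ge> 0" by simp_all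
    then show ?thesis using t1 t2 step[of k] ne2 q0 unfolding E_def X_def distrib_left by linarith
  qed
  have part1: "norm (X0 - Xh (Suc k)) \<le> 0.5 * norm (X0 - Xh k) + 8 * E" for k
    using part1'[of k] by simp
  have part2: "norm (X0 - Xh k) \<le> (1/2)^k * norm X0 + 16 * E" for k
  proof (induction k)
    case 0
    have "E \<ge> 0" using q0 by (simp add: E_def)
    then show ?case using R0 by simp
  next
    case (Suc k)
    have "norm (X0 - Xh (Suc k)) \<le> 0.5 * norm (X0 - Xh k) + 8 * E" by (rule part1)
    also have "\<dots> \<le> 0.5 * ((1/2)^k * norm X0 + 16 * E) + 8 * E" using Suc by simp
    also have "\<dots> = (1/2)^(Suc k) * norm X0 + 16 * E" by simp
    finally show ?case .
  qed
  show ?thesis using part1 part2 unfolding E_def n_def by blast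
qed

end
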